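(* Let $\pi$ and $\pi'$ be grounded permutations of length $k$ that are strongly c-forest-Wilf equivalent. Then $\pi$ and $\pi'$ have the same streak, and for every $i\in\{2,\dots,k\}$ the height of $i$ in $\pi$ equals the height of $i$ in $\pi'$.
   Context: A pattern of length $k$ is a permutation $\pi=\pi(1)\cdots\pi(k)$ of $[k]$. The streak of $\pi$ is the largest integer $m$ with $\pi(i)=i$ for all $1\le i\le m$. For $1<i\le k$, the height of $\pi(i)$ in $\pi$ is the largest integer $m<i$ such that $\pi(i-m+1)<\cdots<\pi(i)$; for a value $j\ne\pi(1)$, the height of $j$ in $\pi$ is the height of $\pi(i)$ where $\pi(i)=j$. $\pi$ is grounded if $\pi\ne 12\cdots k$ and there is a positive integer $m$ with $\pi(1)\cdots\pi(m)=1\cdots m$ such that $\pi(2)\cdots\pi(k)$ contains no $m+1$ consecutive entries in increasing order. Rooted labeled forests on $[n]$ are unordered forests with a root in each component and distinct labels from $[n]$; a consecutive instance of $\pi$ is a downward path $v_1,\dots,v_k$ ($v_i$ the parent of $v_{i+1}$) whose labels are in the same relative order as $\pi$. Patterns $\pi,\pi'$ are strongly c-forest-Wilf equivalent if for all $m,n\ge0$ the number of rooted labeled forests on $[n]$ with exactly $m$ consecutive instances of $\pi$ equals the number with exactly $m$ consecutive instances of $\pi'$. *)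

theory Defs
  imports Main
begin

(* Patterns are lists; entry pi(i) (1-indexed) is pi ! (i - 1). *)
definition is_pattern :: "nat list \<Rightarrow> bool" where
  "is_pattern pi \<longleftrightarrow> distinct pi \<and> set pi = {1..length pi}"

definition pe :: "nat list \<Rightarrow> nat \<Rightarrow> nat" where
  "pe pi i = pi ! (i - 1)"

definition streak :: "nat list \<Rightarrow> nat" where
  "streak pi = Max {m. m \<le> length pi \<and> (\<forall>i\<in>{1..m}. pe pi i = i)}"

definition height_pos :: "nat list \<Rightarrow> nat \<Rightarrow> nat" where
  "height_pos pi i = Max {m. 1 \<le> m \<and> m < i \<and>
       (\<forall>j. i - m + 1 \<le> j \<and> j < i \<longrightarrow> pe pi j < pe pi (Suc j))}"

definition height_val :: "nat list \<Rightarrow> nat \<Rightarrow> nat" where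
  "height_val pi j = height_pos pi (THE i. 1 \<le> i \<and> i \<le> length pi \<and> pe pi i = j)"

definition grounded :: "nat list \<Rightarrow> bool" where
  "grounded pi \<longleftrightarrow> pi \<noteq> [1..<Suc (length pi)] \<and>
     (\<exists>m. 0 < m \<and> m \<le> length pi \<and> (\<forall>i\<in>{1..m}. pe pi i = i) \<and>
        \<not> (\<exists>j. 2 \<le> j \<and> j + m \<le> length pi \<and>
              (\<forall>l. j \<le> l \<and> l < j + m \<longrightarrow> pe pi l < pe pi (Suc l))))"

(* Rooted labeled forests on [n], represented by their parent maps
   (None = root); acyclicity: following parents from any vertex reaches a root. *)
definition forests :: "nat \<Rightarrow> (nat \<Rightarrow> nat option) set" where
  "forests n = {p. (\<forall>v. v \<notin> {1..n} \<longrightarrow> p v = None) \<and>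
      (\<forall>v\<in>{1..n}. \<forall>u. p v = Some u \<longrightarrow> u \<in> {1..n}) \<and>
      (\<forall>v\<in>{1..n}. \<exists>j. ((\<lambda>x. Option.bind x p) ^^ j) (Some v) = None)}"

(* consecutive instances: downward paths v_1..v_k (v_i parent of v_{i+1})
   order-isomorphic to pi *)
definition instances :: "nat list \<Rightarrow> nat \<Rightarrow> (nat \<Rightarrow> nat option) \<Rightarrow> nat list set" where
  "instances pi n p = {vs. length vs = length pi \<and> set vs \<subseteq> {1..n} \<and>
      (\<forall>i. Suc i < length vs \<longrightarrow> p (vs ! Suc i) = Some (vs ! i)) \<and>
      (\<forall>i<length vs. \<forall>j<length vs. vs ! i < vs ! j \<longleftrightarrow> pi ! i < pi ! j)}"

definition num_instances :: "nat list \<Rightarrow> nat \<Rightarrow> (nat \<Rightarrow> nat option) \<Rightarrow> nat" where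
  "num_instances pi n p = card (instances pi n p)"

definition strongly_c_forest_wilf_equiv :: "nat list \<Rightarrow> nat list \<Rightarrow> bool" where
  "strongly_c_forest_wilf_equiv pi pi' \<longleftrightarrow>
     (\<forall>m n. card {p \<in> forests n. num_instances pi n p = m} =
            card {p \<in> forests n. num_instances pi' n p = m})"

end

theory Submission
  imports Defs
begin

definition cont :: "(nat \<Rightarrow> nat option) \<Rightarrow> nat list \<Rightarrow> bool" where
  "cont p vs \<longleftrightarrow> (\<forall>i. Suc i < length vs \<longrightarrow> p (vs ! Suc i) = Some (vs ! i))"

definition is_forest :: "nat \<Rightarrow> (nat \<Rightarrow> nat option) \<Rightarrow> bool" where
  "is_forest n p \<longleftrightarrow> (\<forall>v. v \<notin> {1..n} \<longrightarrow> p v = None) \<and>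
     (\<forall>v u. p v = Some u \<longrightarrow> u \<in> {1..n}) \<and>
     (\<exists>d::nat\<Rightarrow>nat. \<forall>v u. p v = Some u \<longrightarrow> d u < d v)"

lemma iter_None: "((\<lambda>x. Option.bind x (p::nat \<Rightarrow> nat option)) ^^ j) None = None"
  by (induction j) simp_all

lemma iter_Suc_Some: "((\<lambda>x. Option.bind x (p::nat \<Rightarrow> nat option)) ^^ Suc j) (Some v) = ((\<lambda>x. Option.bind x p) ^^ j) (p v)"
  by (simp add: funpow_Suc_right del: funpow.simps)

lemma forests_iff: "p \<in> forests n \<longleftrightarrow> is_forest n p"
proof
  assume A: "p \<in> forests n"
  let ?it = "\<lambda>j v. ((\<lambda>x. Option.bind x p) ^^ j) (Some v)"
  define d where "d v = (LEAST j. ?it j v = None)" for v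
  have A': "(\<forall>v. v \<notin> {1..n} \<longrightarrow> p v = None) \<and>
      (\<forall>v\<in>{1..n}. \<forall>u. p v = Some u \<longrightarrow> u \<in> {1..n}) \<and>
      (\<forall>v\<in>{1..n}. \<exists>j. ((\<lambda>x. Option.bind x p) ^^ j) (Some v) = None)"
    using A unfolding forests_def by (rule CollectD)
  have none: "\<forall>v. v \<notin> {1..n} \<longrightarrow> p v = None" using A' by (rule conjunct1)
  have cl: "\<forall>v\<in>{1..n}. \<forall>u. p v = Some u \<longrightarrow> u \<in> {1..n}" using A' by blast
  have ex: "\<forall>v\<in>{1..n}. \<exists>j. ?it j v = None" using A' by blast
  have cl2: "\<forall>v u. p v = Some u \<longrightarrow> u \<in> {1..n}"
  proof (intro allI impI)
    fix v u assume "p v = Some u"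
    moreover have "v \<in> {1..n}" using none calculation by (metis option.distinct(1))
    ultimately show "u \<in> {1..n}" using cl by blast
  qed
  have "\<forall>v u. p v = Some u \<longrightarrow> d u < d v"
  proof (intro allI impI)
    fix v u assume pv: "p v = Some u"
    then have v: "v \<in> {1..n}" using none by fastforce
    have u: "u \<in> {1..n}" using cl2 pv by blast
    obtain j where j: "?it j u = None" using ex u by blast
    have du: "?it (d u) u = None" unfolding d_def by (rule LeastI[of _ j]) (rule j)
    have "?it (Suc (d u)) v = None" using du pv by (simp only: iter_Suc_Some)
    then have "d v \<le> Suc (d u)" unfolding d_def by (rule Least_le)
    obtain jv where jv: "?it jv v = None" using ex v by blast
    have dv: "?it (d v) v = None" unfolding d_def by (rule LeastI[of _ jv]) (rule jv)
    have "d v \<noteq> 0"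
    proof
      assume "d v = 0" with dv show False by simp
    qed
    then obtain j' where j': "d v = Suc j'" by (cases "d v") auto
    have "?it j' u = None" using dv j' pv by (simp only: iter_Suc_Some)
    then have "d u \<le> j'" unfolding d_def by (rule Least_le)
    then show "d u < d v" using j' by simp
  qed
  then show "is_forest n p" unfolding is_forest_def using none cl2 by blast
next
  assume B: "is_forest n p"
  then obtain d :: "nat \<Rightarrow> nat" where d: "\<forall>v u. p v = Some u \<longrightarrow> d u < d v"
    unfolding is_forest_def by blast
  have "\<forall>v. d v = m \<longrightarrow> (\<exists>j. ((\<lambda>x. Option.bind x p) ^^ j) (Some v) = None)" for m
  proof (induction m rule: less_induct)
    case (less m)
    show ?case
    proof (intro allI impI)
      fix v assume dv: "d v = m"
      show "\<exists>j. ((\<lambda>x. Option.bind x p) ^^ j) (Some v) = None"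
      proof (cases "p v")
        case None
        then have "((\<lambda>x. Option.bind x p) ^^ Suc 0) (Some v) = None" by (simp only: iter_Suc_Some) simp
        then show ?thesis by blast
      next
        case (Some u)
        then have "d u < m" using d dv by blast
        then obtain j where "((\<lambda>x. Option.bind x p) ^^ j) (Some u) = None" using less by blast
        then have "((\<lambda>x. Option.bind x p) ^^ Suc j) (Some v) = None" using Some by (simp only: iter_Suc_Some)
        then show ?thesis by blast
      qed
    qed
  qed
  then show "p \<in> forests n" using B unfolding is_forest_def forests_def by blast
qed

lemma root_le:
  assumes d: "\<forall>v u. p v = Some u \<longrightarrow> d u < (d v::nat)"
    and U: "\<forall>v\<in>U-{r}. p v \<in> Some ` U"
  shows "x \<in> U \<Longrightarrow> d r \<le> d x"
proof (induction "d x" arbitrary: x rule: less_induct)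
  case less
  show ?case
  proof (cases "x = r")
    case True then show ?thesis by simp
  next
    case False
    then obtain y where y: "p x = Some y" "y \<in> U" using U less.prems by blast
    then have "d y < d x" using d by blast
    then have "d r \<le> d y" using less y by blast
    then show ?thesis using \<open>d y < d x\<close> by simp
  qed
qed

lemma root_out:
  assumes d: "\<forall>v u. p v = Some u \<longrightarrow> d u < (d v::nat)"
    and U: "\<forall>v\<in>U-{r}. p v \<in> Some ` U" and r: "r \<in> U"
  shows "p r \<notin> Some ` U"
proof
  assume "p r \<in> Some ` U"
  then obtain x where x: "x \<in> U" "p r = Some x" by blast
  then have "d x < d r" using d by blast
  moreover have "d r \<le> d x" using root_le[OF d U x(1)] .
  ultimately show False by simp
qed

definition swp :: "nat set \<Rightarrow> nat \<Rightarrow> nat \<Rightarrow> (nat \<Rightarrow> nat option) \<Rightarrow> (nat \<Rightarrow> nat option) \<Rightarrow> nat \<Rightarrow> nat option" where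
  "swp U r r' p0 p v = (if v \<in> U \<and> v \<noteq> r' then p0 v else if v = r' then p r else p v)"

lemma swp_forest:
  assumes F: "is_forest n p" and F0: "is_forest n p0" and Un: "U \<subseteq> {1..n}"
    and r: "r \<in> U" and r': "r' \<in> U"
    and U: "\<forall>v\<in>U-{r}. p v \<in> Some ` U" and U0: "\<forall>v\<in>U-{r'}. p0 v \<in> Some ` U"
  shows "is_forest n (swp U r r' p0 p)"
proof -
  obtain d :: "nat \<Rightarrow> nat" where d: "\<forall>v u. p v = Some u \<longrightarrow> d u < d v" using F unfolding is_forest_def by blast
  obtain d0 :: "nat \<Rightarrow> nat" where d0: "\<forall>v u. p0 v = Some u \<longrightarrow> d0 u < d0 v" using F0 unfolding is_forest_def by blast
  have finU: "finite U" using Un finite_subset by blast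
  define M where "M = Suc (Max (d0 ` U))"
  have dM: "v \<in> U \<Longrightarrow> d0 v < M" for v unfolding M_def using finU by (simp add: le_imp_less_Suc)
  have M1: "1 \<le> M" unfolding M_def by simp
  define d' where "d' v = (if v \<in> U then M * d r + d0 v else M * d v + (M - 1))" for v
  have rle: "x \<in> U \<Longrightarrow> d r \<le> d x" for x using root_le[OF d U] by blast
  have rout: "p r \<notin> Some ` U" using root_out[OF d U r] .
  have dec: "\<forall>v u. swp U r r' p0 p v = Some u \<longrightarrow> d' u < d' v"
  proof (intro allI impI)
    fix v u assume e: "swp U r r' p0 p v = Some u"
    show "d' u < d' v"
    proof (cases "v \<in> U \<and> v \<noteq> r'")
      case True
      then have "p0 v = Some u" using e unfolding swp_def by simp
      moreover then have "u \<in> U" using U0 True by force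
      ultimately show ?thesis using d0 True unfolding d'_def by force
    next
      case False
      show ?thesis
      proof (cases "v = r'")
        case True
        then have pr: "p r = Some u" using e unfolding swp_def by simp
        then have uU: "u \<notin> U" using rout by blast
        have "d u < d r" using d pr by blast
        then have "M * Suc (d u) \<le> M * d r" by (intro mult_le_mono2) simp
        then have "M * d u + (M - 1) < M * d r" using M1 by simp
        then show ?thesis using uU True r' unfolding d'_def by simp
      next
        case False2: False
        then have vU: "v \<notin> U" using False by blast
        have pv: "p v = Some u" using e False2 vU unfolding swp_def by simp
        then have du: "d u < d v" using d by blast
        show ?thesis
        proof (cases "u \<in> U")
          case True
          have "d r \<le> d u" using rle True .
          then have "d r < d v" using du by simp
          then have "M * Suc (d r) \<le> M * d v" by (intro mult_le_mono2) simp
          then show ?thesis using dM[OF True] True vU unfolding d'_def by simp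
        next
          case False
          have "M * Suc (d u) \<le> M * d v" using du by (intro mult_le_mono2) simp
          then show ?thesis using False vU M1 unfolding d'_def by simp
        qed
      qed
    qed
  qed
  have Fn: "\<forall>v. v \<notin> {1..n} \<longrightarrow> p v = None" using F unfolding is_forest_def by blast
  have Fc: "\<forall>v u. p v = Some u \<longrightarrow> u \<in> {1..n}" using F unfolding is_forest_def by blast
  have F0c: "\<forall>v u. p0 v = Some u \<longrightarrow> u \<in> {1..n}" using F0 unfolding is_forest_def by blast
  have c1: "\<forall>v. v \<notin> {1..n} \<longrightarrow> swp U r r' p0 p v = None"
  proof (intro allI impI)
    fix v assume v: "v \<notin> {1..n}"
    then have "v \<notin> U" using Un by blast
    then show "swp U r r' p0 p v = None" using v Fn r' unfolding swp_def by auto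
  qed
  have c2: "\<forall>v u. swp U r r' p0 p v = Some u \<longrightarrow> u \<in> {1..n}"
  proof (intro allI impI)
    fix v u assume e: "swp U r r' p0 p v = Some u"
    have "p0 v = Some u \<or> p r = Some u \<or> p v = Some u"
      using e unfolding swp_def by (simp split: if_splits)
    then show "u \<in> {1..n}" using Fc F0c by blast
  qed
  show ?thesis unfolding is_forest_def using c1 c2 dec by blast
qed

lemma swp_inj:
  assumes "r' \<in> U" and "\<forall>v\<in>U-{r}. p1 v = p2 v"
    and "swp U r r' p0 p1 = swp U r r' p0 p2"
  shows "p1 = p2"
proof
  fix v
  show "p1 v = p2 v"
  proof (cases "v \<in> U - {r}")
    case True then show ?thesis using assms by blast
  next
    case False
    show ?thesis
    proof (cases "v = r")
      case True
      have "swp U r r' p0 p1 r' = swp U r r' p0 p2 r'" using assms(3) by simp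
      then show ?thesis using True unfolding swp_def by simp
    next
      case False2: False
      then have "v \<notin> U" using False by blast
      moreover have "swp U r r' p0 p1 v = swp U r r' p0 p2 v" using assms(3) by simp
      ultimately show ?thesis using assms(1) unfolding swp_def by (auto split: if_splits)
    qed
  qed
qed

lemma swp_in: "v \<in> U \<Longrightarrow> v \<noteq> r' \<Longrightarrow> swp U r r' p0 p v = p0 v"
  unfolding swp_def by simp

lemma swp_out: "v \<notin> U \<Longrightarrow> r' \<in> U \<Longrightarrow> swp U r r' p0 p v = p v"
  unfolding swp_def by auto

definition rlb :: "nat set \<Rightarrow> (nat \<Rightarrow> nat) \<Rightarrow> (nat \<Rightarrow> nat option) \<Rightarrow> nat \<Rightarrow> nat option" where
  "rlb U f p w = (if w \<in> f ` U then (case p (the_inv_into U f w) of None \<Rightarrow> None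
      | Some x \<Rightarrow> if x \<in> U then Some (f x) else None) else None)"

lemma rlb_forest:
  assumes F: "is_forest N p" and inj: "inj_on f U" and img: "f ` U \<subseteq> {1..n}"
  shows "is_forest n (rlb U f p)"
proof -
  obtain d :: "nat \<Rightarrow> nat" where d: "\<forall>v u. p v = Some u \<longrightarrow> d u < d v" using F unfolding is_forest_def by blast
  define d' where "d' w = d (the_inv_into U f w)" for w
  have dec: "\<forall>v u. rlb U f p v = Some u \<longrightarrow> d' u < d' v"
  proof (intro allI impI)
    fix w y assume e: "rlb U f p w = Some y"
    then have w: "w \<in> f ` U" unfolding rlb_def by (auto split: if_splits)
    then obtain v where v: "v \<in> U" "w = f v" by blast
    have iv: "the_inv_into U f w = v" using v inj by (simp add: the_inv_into_f_f)
    obtain x where x: "p v = Some x" "x \<in> U" "y = f x" using e w iv unfolding rlb_def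
      by (auto split: option.splits if_splits)
    have "the_inv_into U f y = x" using x inj by (simp add: the_inv_into_f_f)
    then show "d' y < d' w" unfolding d'_def using iv x d by simp
  qed
  have c1: "\<forall>v. v \<notin> {1..n} \<longrightarrow> rlb U f p v = None" using img unfolding rlb_def by auto
  have c2: "\<forall>v u. rlb U f p v = Some u \<longrightarrow> u \<in> {1..n}" using img unfolding rlb_def
    by (auto split: option.splits if_splits)
  show ?thesis unfolding is_forest_def using c1 c2 dec by blast
qed

lemma rlb_cont:
  assumes "cont p vs" "set vs \<subseteq> U" "inj_on f U"
  shows "cont (rlb U f p) (map f vs)"
  unfolding cont_def
proof (intro allI impI)
  fix i assume i: "Suc i < length (map f vs)"
  have a: "vs ! Suc i \<in> U" "vs ! i \<in> U" using i assms(2) by auto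
  have "p (vs ! Suc i) = Some (vs ! i)" using assms(1) i unfolding cont_def by simp
  then show "rlb U f p (map f vs ! Suc i) = Some (map f vs ! i)"
    using i a assms(3) unfolding rlb_def by (simp add: the_inv_into_f_f)
qed


definition ordd :: "nat list \<Rightarrow> nat list \<Rightarrow> bool" where
  "ordd pi vs \<longleftrightarrow> length vs = length pi \<and>
     (\<forall>i<length vs. \<forall>j<length vs. vs ! i < vs ! j \<longleftrightarrow> pi ! i < pi ! j)"

definition Cand :: "nat list \<Rightarrow> nat \<Rightarrow> nat list set" where
  "Cand pi n = {vs. ordd pi vs \<and> set vs \<subseteq> {1..n}}"

lemma instances_eq: "instances pi n p = {vs \<in> Cand pi n. cont p vs}"
  unfolding instances_def Cand_def ordd_def cont_def by auto

lemma finite_Cand: "finite (Cand pi n)"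
proof -
  have "Cand pi n \<subseteq> {xs. set xs \<subseteq> {1..n} \<and> length xs = length pi}"
    unfolding Cand_def ordd_def by auto
  then show ?thesis using finite_lists_length_eq[of "{1..n}" "length pi"] finite_subset by blast
qed

lemma card_Cand_le: "card (Cand pi n) \<le> card {xs. set xs \<subseteq> {1..n} \<and> length xs = length pi}"
proof -
  have "Cand pi n \<subseteq> {xs. set xs \<subseteq> {1..n} \<and> length xs = length pi}"
    unfolding Cand_def ordd_def by auto
  then show ?thesis using finite_lists_length_eq[of "{1..n}" "length pi"] card_mono by blast
qed

lemma finite_forests: "finite (forests n)"
proof -
  define L where "L = {xs. set xs \<subseteq> insert None (Some ` {1..n}) \<and> length xs = n}"
  define h where "h xs v = (if v \<in> {1..n} then xs ! (v - 1) else None)" for xs :: "nat option list" and v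
  have fL: "finite L" unfolding L_def by (rule finite_lists_length_eq) simp
  have "forests n \<subseteq> h ` L"
  proof
    fix p assume p: "p \<in> forests n"
    then have F: "is_forest n p" using forests_iff by blast
    have Fn: "\<forall>v. v \<notin> {1..n} \<longrightarrow> p v = None" using F unfolding is_forest_def by blast
    have Fc: "\<forall>v u. p v = Some u \<longrightarrow> u \<in> {1..n}" using F unfolding is_forest_def by blast
    define xs where "xs = map (\<lambda>i. p (Suc i)) [0..<n]"
    have "xs \<in> L" unfolding L_def xs_def
    proof (intro CollectI conjI)
      show "set (map (\<lambda>i. p (Suc i)) [0..<n]) \<subseteq> insert None (Some ` {1..n})"
      proof
        fix y assume "y \<in> set (map (\<lambda>i. p (Suc i)) [0..<n])"
        then obtain v where "y = p v" by auto
        then show "y \<in> insert None (Some ` {1..n})" using Fc by (cases y) auto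
      qed
    qed simp
    moreover have "p = h xs"
    proof
      fix v show "p v = h xs v"
      proof (cases "v \<in> {1..n}")
        case True
        then have i: "v - 1 < n" by auto
        then have "xs ! (v - 1) = p (Suc (v - 1))" unfolding xs_def by (simp del: upt_Suc)
        then have "xs ! (v - 1) = p v" using True by simp
        then show ?thesis using True unfolding h_def by simp
      next
        case False
        then have "p v = None" using Fn by blast
        moreover have "h xs v = None" using False unfolding h_def by (simp only: if_False)
        ultimately show ?thesis by simp
      qed
    qed
    ultimately show "p \<in> h ` L" by blast
  qed
  then show ?thesis using fL finite_subset by blast
qed

definition FF :: "nat \<Rightarrow> nat list \<Rightarrow> nat list \<Rightarrow> nat" where
  "FF n P Q = card {p \<in> forests n. cont p P \<and> cont p Q}"

definition Pairs :: "nat list \<Rightarrow> nat \<Rightarrow> (nat list \<times> nat list) set" where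
  "Pairs pi n = {x \<in> Cand pi n \<times> Cand pi n. fst x \<noteq> snd x}"

definition Wt :: "nat list \<Rightarrow> nat \<Rightarrow> nat" where
  "Wt pi n = (\<Sum>x\<in>Pairs pi n. FF n (fst x) (snd x))"

lemma finite_Pairs: "finite (Pairs pi n)"
  unfolding Pairs_def using finite_Cand by auto

lemma card_offdiag:
  assumes "finite A"
  shows "card {x \<in> A \<times> A. fst x \<noteq> snd x} = card A * (card A - 1)"
proof -
  have eq: "{x \<in> A \<times> A. fst x \<noteq> snd x} = A \<times> A - (\<lambda>a. (a, a)) ` A" by auto
  have sub: "(\<lambda>a. (a, a)) ` A \<subseteq> A \<times> A" by auto
  have c1: "card ((\<lambda>a. (a, a)) ` A) = card A" by (rule card_image) (auto simp: inj_on_def)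
  have "card {x \<in> A \<times> A. fst x \<noteq> snd x} = card A * card A - card A"
    unfolding eq using card_Diff_subset[OF finite_imageI[OF assms] sub] c1 card_cartesian_product[of A A]
    by simp
  then show ?thesis by (simp add: diff_mult_distrib2)
qed

lemma W_moment:
  "(\<Sum>p\<in>forests n. num_instances pi n p * (num_instances pi n p - 1)) = Wt pi n"
proof -
  have fP: "finite (Pairs pi n)" by (rule finite_Pairs)
  have ff: "finite (forests n)" by (rule finite_forests)
  have step: "num_instances pi n p * (num_instances pi n p - 1) =
      (\<Sum>x\<in>Pairs pi n. if cont p (fst x) \<and> cont p (snd x) then 1 else 0)" for p
  proof -
    let ?I = "{vs \<in> Cand pi n. cont p vs}"
    have fI: "finite ?I" using finite_Cand by simp
    have "num_instances pi n p * (num_instances pi n p - 1) = card {x \<in> ?I \<times> ?I. fst x \<noteq> snd x}"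
      unfolding num_instances_def instances_eq using card_offdiag[OF fI] by simp
    also have "{x \<in> ?I \<times> ?I. fst x \<noteq> snd x} = {x \<in> Pairs pi n. cont p (fst x) \<and> cont p (snd x)}"
      unfolding Pairs_def by auto
    also have "card \<dots> = (\<Sum>x\<in>{x \<in> Pairs pi n. cont p (fst x) \<and> cont p (snd x)}. 1)" by simp
    also have "\<dots> = (\<Sum>x\<in>Pairs pi n. if cont p (fst x) \<and> cont p (snd x) then 1 else 0)"
      by (rule sum.inter_filter[OF fP])
    finally show ?thesis .
  qed
  have "(\<Sum>p\<in>forests n. num_instances pi n p * (num_instances pi n p - 1)) =
      (\<Sum>p\<in>forests n. \<Sum>x\<in>Pairs pi n. if cont p (fst x) \<and> cont p (snd x) then 1 else 0)"
    using step by simp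
  also have "\<dots> = (\<Sum>x\<in>Pairs pi n. \<Sum>p\<in>forests n. if cont p (fst x) \<and> cont p (snd x) then 1 else 0)"
    by (rule sum.swap)
  also have "\<dots> = (\<Sum>x\<in>Pairs pi n. FF n (fst x) (snd x))"
  proof (rule sum.cong[OF refl])
    fix x
    have "(\<Sum>p\<in>forests n. if cont p (fst x) \<and> cont p (snd x) then 1 else 0) =
        (\<Sum>p\<in>{p \<in> forests n. cont p (fst x) \<and> cont p (snd x)}. (1::nat))"
      by (rule sum.inter_filter[OF ff, symmetric])
    then show "(\<Sum>p\<in>forests n. if cont p (fst x) \<and> cont p (snd x) then 1 else 0) = FF n (fst x) (snd x)"
      unfolding FF_def by simp
  qed
  finally show ?thesis unfolding Wt_def .
qed

lemma moment_eq:
  fixes g :: "nat \<Rightarrow> nat"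
  assumes eq: "strongly_c_forest_wilf_equiv pi pi'" and len: "length pi = length pi'"
  shows "(\<Sum>p\<in>forests n. g (num_instances pi n p)) = (\<Sum>p\<in>forests n. g (num_instances pi' n p))"
proof -
  define B where "B = card {xs. set xs \<subseteq> {1..n} \<and> length xs = length pi}"
  have ff: "finite (forests n)" by (rule finite_forests)
  have gen: "(\<Sum>p\<in>forests n. g (num_instances s n p)) = (\<Sum>m\<in>{..B}. g m * card {p \<in> forests n. num_instances s n p = m})"
    if ls: "length s = length pi" for s
  proof -
    have bnd: "num_instances s n p \<le> B" for p
    proof -
      have "num_instances s n p \<le> card (Cand s n)"
        unfolding num_instances_def instances_eq by (rule card_mono[OF finite_Cand]) auto
      also have "\<dots> \<le> B" unfolding B_def using card_Cand_le[of s n] ls by simp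
      finally show ?thesis .
    qed
    have "(\<Sum>p\<in>forests n. g (num_instances s n p)) =
        (\<Sum>m\<in>{..B}. \<Sum>p\<in>{p. p \<in> forests n \<and> num_instances s n p = m}. g (num_instances s n p))"
      by (rule sum.group[symmetric]) (use ff bnd in auto)
    also have "\<dots> = (\<Sum>m\<in>{..B}. g m * card {p \<in> forests n. num_instances s n p = m})"
    proof (rule sum.cong[OF refl])
      fix m
      have "(\<Sum>p\<in>{p. p \<in> forests n \<and> num_instances s n p = m}. g (num_instances s n p)) =
          (\<Sum>p\<in>{p. p \<in> forests n \<and> num_instances s n p = m}. g m)" by (rule sum.cong) auto
      then show "(\<Sum>p\<in>{p. p \<in> forests n \<and> num_instances s n p = m}. g (num_instances s n p)) =
          g m * card {p \<in> forests n. num_instances s n p = m}" by simp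
    qed
    finally show ?thesis .
  qed
  have "\<forall>m. card {p \<in> forests n. num_instances pi n p = m} = card {p \<in> forests n. num_instances pi' n p = m}"
    using eq unfolding strongly_c_forest_wilf_equiv_def by blast
  then show ?thesis using gen[of pi] gen[of pi'] len by simp
qed

lemma Wt_eq:
  assumes "strongly_c_forest_wilf_equiv pi pi'" and "length pi = length pi'"
  shows "Wt pi n = Wt pi' n"
  using moment_eq[OF assms, where n = n and g = "\<lambda>m. m * (m - 1)"] W_moment[where n = n and pi = pi] W_moment[where n = n and pi = pi'] by simp


lemma card_idx_filter:
  assumes "distinct xs"
  shows "card {j. j < length xs \<and> Q (xs ! j)} = card {x \<in> set xs. Q x}"
proof -
  have "(\<lambda>j. xs ! j) ` {j. j < length xs \<and> Q (xs ! j)} = {x \<in> set xs. Q x}"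
    by (auto simp: in_set_conv_nth)
  moreover have "inj_on (\<lambda>j. xs ! j) {j. j < length xs \<and> Q (xs ! j)}"
    using assms by (auto simp: inj_on_def nth_eq_iff_index_eq)
  ultimately show ?thesis using card_image by metis
qed

lemma ordd_len: "ordd pi vs \<Longrightarrow> length vs = length pi"
  unfolding ordd_def by simp

lemma ordd_lt: "ordd pi vs \<Longrightarrow> i < length pi \<Longrightarrow> j < length pi \<Longrightarrow> vs ! i < vs ! j \<longleftrightarrow> pi ! i < pi ! j"
  unfolding ordd_def by simp

lemma pat_distinct: "is_pattern pi \<Longrightarrow> distinct pi"
  unfolding is_pattern_def by simp

lemma pat_set: "is_pattern pi \<Longrightarrow> set pi = {1..length pi}"
  unfolding is_pattern_def by simp

lemma pat_range: "is_pattern pi \<Longrightarrow> i < length pi \<Longrightarrow> pi ! i \<in> {1..length pi}"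
  using pat_set nth_mem by blast

lemma ordd_distinct:
  assumes "ordd pi vs" "is_pattern pi"
  shows "distinct vs"
proof -
  have "vs ! i \<noteq> vs ! j" if "i < length vs" "j < length vs" "i \<noteq> j" for i j
  proof -
    have l: "length vs = length pi" using assms ordd_len by blast
    have "pi ! i \<noteq> pi ! j" using that l pat_distinct[OF assms(2)] by (simp add: nth_eq_iff_index_eq)
    then have "pi ! i < pi ! j \<or> pi ! j < pi ! i" by arith
    then show ?thesis using ordd_lt[OF assms(1)] that l by fastforce
  qed
  then show ?thesis by (auto simp: distinct_conv_nth)
qed

lemma pat_rank:
  assumes "is_pattern pi" "i < length pi"
  shows "card {j. j < length pi \<and> pi ! j < pi ! i} = pi ! i - 1"
proof -
  have "card {j. j < length pi \<and> pi ! j < pi ! i} = card {x \<in> set pi. x < pi ! i}"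
    by (rule card_idx_filter[OF pat_distinct[OF assms(1)]])
  also have "{x \<in> set pi. x < pi ! i} = {1..<pi ! i}"
    using pat_set[OF assms(1)] pat_range[OF assms] by auto
  finally show ?thesis by simp
qed

lemma ordd_rank:
  assumes "ordd pi vs" "is_pattern pi" "i < length pi"
  shows "card {x \<in> set vs. x < vs ! i} = pi ! i - 1"
proof -
  have l: "length vs = length pi" using assms ordd_len by blast
  have "card {x \<in> set vs. x < vs ! i} = card {j. j < length vs \<and> vs ! j < vs ! i}"
    by (rule card_idx_filter[OF ordd_distinct[OF assms(1,2)], symmetric])
  also have "{j. j < length vs \<and> vs ! j < vs ! i} = {j. j < length pi \<and> pi ! j < pi ! i}"
    using ordd_lt[OF assms(1) _ assms(3)] l by auto
  finally show ?thesis using pat_rank[OF assms(2,3)] by simp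
qed

lemma rank_inj:
  assumes "finite X" "x \<in> X" "y \<in> X" "card {z \<in> X. z < x} = card {z \<in> X. z < (y::nat)}"
  shows "x = y"
proof (rule ccontr)
  assume "x \<noteq> y"
  then have "x < y \<or> y < x" by arith
  then show False
  proof
    assume xy: "x < y"
    have "{z \<in> X. z < x} \<subset> {z \<in> X. z < y}" using xy assms(2) by auto
    then have "card {z \<in> X. z < x} < card {z \<in> X. z < y}" using assms(1) by (intro psubset_card_mono) auto
    then show False using assms(4) by simp
  next
    assume xy: "y < x"
    have "{z \<in> X. z < y} \<subset> {z \<in> X. z < x}" using xy assms(3) by auto
    then have "card {z \<in> X. z < y} < card {z \<in> X. z < x}" using assms(1) by (intro psubset_card_mono) auto
    then show False using assms(4) by simp
  qed
qed

lemma ordd_unique: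
  assumes "ordd pi vs" "ordd pi ws" "is_pattern pi" "set vs = set ws"
  shows "vs = ws"
proof (rule nth_equalityI)
  show l: "length vs = length ws" using assms(1,2) ordd_len by metis
  fix i assume i: "i < length vs"
  have ip: "i < length pi" using i assms(1) ordd_len by metis
  have "card {x \<in> set ws. x < vs ! i} = card {x \<in> set ws. x < ws ! i}"
    using ordd_rank[OF assms(1,3) ip] ordd_rank[OF assms(2,3) ip] assms(4) by simp
  moreover have "vs ! i \<in> set ws" using i assms(4) nth_mem by metis
  moreover have "ws ! i \<in> set ws" using i l nth_mem by metis
  ultimately show "vs ! i = ws ! i" using rank_inj[of "set ws"] by blast
qed

definition arr :: "nat list \<Rightarrow> nat set \<Rightarrow> nat list" where
  "arr pi X = map (\<lambda>i. sorted_list_of_set X ! (pi ! i - 1)) [0..<length pi]"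

lemma sorted_nth_less_iff:
  assumes "sorted_wrt (<) (xs::nat list)" "a < length xs" "b < length xs"
  shows "xs ! a < xs ! b \<longleftrightarrow> a < b"
proof
  assume "a < b" then show "xs ! a < xs ! b" using sorted_wrt_nth_less assms by blast
next
  assume h: "xs ! a < xs ! b"
  show "a < b"
  proof (rule ccontr)
    assume "\<not> a < b"
    then have "b < a \<or> b = a" by arith
    then show False
    proof
      assume "b < a" then have "xs ! b < xs ! a" using sorted_wrt_nth_less assms by blast
      then show False using h by simp
    qed (use h in simp)
  qed
qed

lemma arr_props:
  assumes "is_pattern pi" "finite X" "card X = length pi"
  shows "ordd pi (arr pi X)" "set (arr pi X) = X" "length (arr pi X) = length pi"
proof -
  let ?s = "sorted_list_of_set X"
  have ls: "length ?s = length pi" using assms by simp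
  have ss: "sorted_wrt (<) ?s" by simp
  have rng: "i < length pi \<Longrightarrow> pi ! i - 1 < length pi" for i
    using pat_range[OF assms(1)] by fastforce
  show "length (arr pi X) = length pi" unfolding arr_def by simp
  show "ordd pi (arr pi X)" unfolding ordd_def
  proof (intro conjI allI impI)
    fix i j assume i: "i < length (arr pi X)" and j: "j < length (arr pi X)"
    then have i': "i < length pi" and j': "j < length pi" unfolding arr_def by auto
    have "arr pi X ! i < arr pi X ! j \<longleftrightarrow> ?s ! (pi ! i - 1) < ?s ! (pi ! j - 1)"
      unfolding arr_def using i' j' by simp
    also have "\<dots> \<longleftrightarrow> pi ! i - 1 < pi ! j - 1"
      using sorted_nth_less_iff[OF ss] rng i' j' ls by simp
    also have "\<dots> \<longleftrightarrow> pi ! i < pi ! j" using pat_range[OF assms(1)] i' j' by fastforce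
    finally show "arr pi X ! i < arr pi X ! j \<longleftrightarrow> pi ! i < pi ! j" .
  qed (simp add: arr_def)
  show "set (arr pi X) = X"
  proof
    show "set (arr pi X) \<subseteq> X"
    proof
      fix x assume "x \<in> set (arr pi X)"
      then obtain i where i: "i < length pi" "x = ?s ! (pi ! i - 1)" unfolding arr_def by auto
      then show "x \<in> X" using rng[OF i(1)] ls assms(2) nth_mem by (metis set_sorted_list_of_set)
    qed
  next
    show "X \<subseteq> set (arr pi X)"
    proof
      fix x assume x: "x \<in> X"
      then obtain a where a: "a < length ?s" "?s ! a = x" using assms(2) by (metis in_set_conv_nth set_sorted_list_of_set)
      have "Suc a \<in> set pi" using pat_set[OF assms(1)] a(1) ls by auto
      then obtain i where i: "i < length pi" "pi ! i = Suc a" by (metis in_set_conv_nth)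
      then have "arr pi X ! i = x" unfolding arr_def using a by simp
      then show "x \<in> set (arr pi X)" using i unfolding arr_def by (metis length_map length_upt diff_zero nth_mem)
    qed
  qed
qed

lemma ordd_card_set:
  assumes "ordd pi vs" "is_pattern pi"
  shows "card (set vs) = length pi"
  using distinct_card[OF ordd_distinct[OF assms]] ordd_len[OF assms(1)] by simp

lemma ordd_eq_arr:
  assumes "ordd pi vs" "is_pattern pi"
  shows "vs = arr pi (set vs)"
proof -
  have c: "card (set vs) = length pi" by (rule ordd_card_set[OF assms])
  show ?thesis using ordd_unique[OF assms(1) arr_props(1)[OF assms(2) _ c] assms(2)] arr_props(2)[OF assms(2) _ c] by simp
qed

lemma ordd_map_mono:
  assumes "ordd pi vs" "strict_mono_on (set vs) f"
  shows "ordd pi (map f vs)"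
  unfolding ordd_def
proof (intro conjI allI impI)
  show "length (map f vs) = length pi" using assms(1) ordd_len by simp
  fix i j assume i: "i < length (map f vs)" and j: "j < length (map f vs)"
  have m: "vs ! i \<in> set vs" "vs ! j \<in> set vs" using i j by auto
  have "f (vs ! i) < f (vs ! j) \<longleftrightarrow> vs ! i < vs ! j"
  proof
    assume "vs ! i < vs ! j" then show "f (vs ! i) < f (vs ! j)" using assms(2) m by (simp add: strict_mono_on_def)
  next
    assume h: "f (vs ! i) < f (vs ! j)"
    show "vs ! i < vs ! j"
    proof (rule ccontr)
      assume "\<not> vs ! i < vs ! j"
      then have "vs ! j < vs ! i \<or> vs ! j = vs ! i" by arith
      then show False
      proof
        assume "vs ! j < vs ! i" then have "f (vs ! j) < f (vs ! i)" using assms(2) m by (simp add: strict_mono_on_def)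
        then show False using h by simp
      qed (use h in simp)
    qed
  qed
  then show "map f vs ! i < map f vs ! j \<longleftrightarrow> pi ! i < pi ! j"
    using i j assms(1) unfolding ordd_def by simp
qed


definition child :: "nat list list \<Rightarrow> nat \<Rightarrow> bool" where
  "child Ls v \<longleftrightarrow> (\<exists>L\<in>set Ls. \<exists>i. Suc i < length L \<and> v = L ! Suc i)"

definition allc :: "(nat \<Rightarrow> nat option) \<Rightarrow> nat list list \<Rightarrow> bool" where
  "allc p Ls \<longleftrightarrow> (\<forall>L\<in>set Ls. cont p L)"

lemma child_det:
  assumes "allc p Ls" "allc p' Ls" "child Ls v"
  shows "p v = p' v"
  using assms unfolding allc_def child_def cont_def by force

lemma child_in:
  assumes "allc p Ls" "\<forall>L\<in>set Ls. set L \<subseteq> U" "child Ls v"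
  shows "p v \<in> Some ` U"
proof -
  obtain L i where L: "L \<in> set Ls" "Suc i < length L" "v = L ! Suc i" using assms(3) unfolding child_def by blast
  then have "p v = Some (L ! i)" using assms(1) unfolding allc_def cont_def by blast
  moreover have "L ! i \<in> U" using L assms(2) by force
  ultimately show ?thesis by blast
qed

lemma swap_card:
  assumes Un: "U \<subseteq> {1..n}" and r: "r \<in> U" and r': "r' \<in> U"
    and cov: "\<forall>v\<in>U-{r}. child Ls v" and sub: "\<forall>L\<in>set Ls. set L \<subseteq> U"
    and pz: "pz \<in> forests n" "allc pz Ls'" and cov': "\<forall>v\<in>U-{r'}. child Ls' v"
    and sub': "\<forall>L\<in>set Ls'. set L \<subseteq> U"
    and Ks: "\<forall>K\<in>set Ks. \<forall>i. Suc i < length K \<longrightarrow> K ! Suc i \<notin> U"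
  shows "card {p \<in> forests n. allc p Ls \<and> allc p Ks} \<le> card {p \<in> forests n. allc p Ls' \<and> allc p Ks}"
proof -
  let ?A = "{p \<in> forests n. allc p Ls \<and> allc p Ks}"
  let ?B = "{p \<in> forests n. allc p Ls' \<and> allc p Ks}"
  let ?f = "swp U r r' pz"
  have F0: "is_forest n pz" using pz forests_iff by blast
  obtain d0 :: "nat \<Rightarrow> nat" where d0: "\<forall>v u. pz v = Some u \<longrightarrow> d0 u < d0 v" using F0 unfolding is_forest_def by blast
  have U0: "\<forall>v\<in>U-{r'}. pz v \<in> Some ` U" using child_in[OF pz(2) sub'] cov' by blast
  have rout: "pz r' \<notin> Some ` U" by (rule root_out[OF d0 U0 r'])
  have img: "?f ` ?A \<subseteq> ?B"
  proof
    fix q assume "q \<in> ?f ` ?A"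
    then obtain p where p: "p \<in> ?A" "q = ?f p" by blast
    have F: "is_forest n p" using p forests_iff by blast
    have Up: "\<forall>v\<in>U-{r}. p v \<in> Some ` U" using child_in[of p Ls U] p sub cov by blast
    have Fq: "is_forest n q" using swp_forest[OF F F0 Un r r' Up U0] p by simp
    have c1: "allc q Ls'" unfolding allc_def cont_def
    proof (intro ballI allI impI)
      fix L i assume L: "L \<in> set Ls'" and i: "Suc i < length L"
      have e: "pz (L ! Suc i) = Some (L ! i)" using pz(2) L i unfolding allc_def cont_def by blast
      have m: "L ! Suc i \<in> U" "L ! i \<in> U" using sub' L i by force+
      have "L ! Suc i \<noteq> r'" using rout e m by force
      then show "q (L ! Suc i) = Some (L ! i)" using p swp_in[OF m(1)] e by simp
    qed
    have c2: "allc q Ks" unfolding allc_def cont_def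
    proof (intro ballI allI impI)
      fix K i assume K: "K \<in> set Ks" and i: "Suc i < length K"
      have "K ! Suc i \<notin> U" using Ks K i by blast
      then have "q (K ! Suc i) = p (K ! Suc i)" using p swp_out r' by simp
      then show "q (K ! Suc i) = Some (K ! i)" using p K i unfolding allc_def cont_def by simp
    qed
    show "q \<in> ?B" using Fq c1 c2 forests_iff by blast
  qed
  have inj: "inj_on ?f ?A"
  proof (rule inj_onI)
    fix p1 p2 assume p1: "p1 \<in> ?A" and p2: "p2 \<in> ?A" and e: "?f p1 = ?f p2"
    have "\<forall>v\<in>U-{r}. p1 v = p2 v" using child_det[of p1 Ls p2] p1 p2 cov by blast
    then show "p1 = p2" using swp_inj[OF r' _ e] by blast
  qed
  have fB: "finite ?B" using finite_forests by simp
  show ?thesis using card_inj_on_le[OF inj img fB] .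
qed

lemma climb:
  assumes "cont p P" "cont p Q" "i < length P" "j < length Q" "P ! i = Q ! j"
  shows "t \<le> i \<Longrightarrow> t \<le> j \<Longrightarrow> P ! (i - t) = Q ! (j - t)"
proof (induction t)
  case 0 then show ?case using assms by simp
next
  case (Suc t)
  then have e: "P ! (i - t) = Q ! (j - t)" by simp
  have a: "Suc (i - Suc t) = i - t" "Suc (j - Suc t) = j - t" using Suc.prems by auto
  have "p (P ! (i - t)) = Some (P ! (i - Suc t))" using assms(1,3) a(1) unfolding cont_def
    by (metis Suc.prems(1) Suc_le_lessD diff_less_mono2 le_less_trans less_imp_diff_less zero_less_Suc)
  moreover have "p (Q ! (j - t)) = Some (Q ! (j - Suc t))" using assms(2,4) a(2) unfolding cont_def
    by (metis Suc.prems(2) Suc_le_lessD diff_less_mono2 le_less_trans less_imp_diff_less zero_less_Suc)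
  ultimately show ?case using e by simp
qed

lemma root_exists:
  assumes "cont p P" "cont p Q" "set P \<inter> set Q \<noteq> {}"
  shows "\<exists>r\<in>set P \<union> set Q. \<forall>v\<in>(set P \<union> set Q) - {r}. child [P, Q] v"
proof -
  obtain x where "x \<in> set P" "x \<in> set Q" using assms(3) by blast
  then obtain i j where ij: "i < length P" "j < length Q" "P ! i = Q ! j" by (metis in_set_conv_nth)
  show ?thesis
  proof (cases "j \<le> i")
    case True
    have q0: "Q ! 0 = P ! (i - j)" using climb[OF assms(1,2) ij, of j] True by simp
    have "P ! 0 \<in> set P" using ij(1) nth_mem[of 0 P] by (cases P) auto
    moreover have "\<forall>v\<in>(set P \<union> set Q) - {P ! 0}. child [P, Q] v"
    proof
      fix v assume v: "v \<in> (set P \<union> set Q) - {P ! 0}"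
      show "child [P, Q] v"
      proof (cases "v \<in> set P")
        case True
        then obtain a where a: "a < length P" "v = P ! a" by (metis in_set_conv_nth)
        then have "a \<noteq> 0" using v by (metis DiffD2 singletonI)
        then have "Suc (a - 1) < length P \<and> v = P ! Suc (a - 1)" using a by simp
        then show ?thesis unfolding child_def by force
      next
        case False
        then have "v \<in> set Q" using v by blast
        then obtain b where b: "b < length Q" "v = Q ! b" by (metis in_set_conv_nth)
        show ?thesis
        proof (cases "b = 0")
          case True
          then have "v = P ! (i - j)" using b q0 by simp
          then have "i - j \<noteq> 0" using v by auto
          then obtain c where c: "i - j = Suc c" by (cases "i - j") auto
          then have "Suc c < length P \<and> v = P ! Suc c" using ij \<open>v = P ! (i - j)\<close> by auto
          then show ?thesis unfolding child_def by force
        next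
          case False
          then have "Suc (b - 1) < length Q \<and> v = Q ! Suc (b - 1)" using b by simp
          then show ?thesis unfolding child_def by force
        qed
      qed
    qed
    ultimately show ?thesis by blast
  next
    case False
    have p0: "P ! 0 = Q ! (j - i)" using climb[OF assms(1,2) ij, of i] False by simp
    have "Q ! 0 \<in> set Q" using ij(2) nth_mem[of 0 Q] by (cases Q) auto
    moreover have "\<forall>v\<in>(set P \<union> set Q) - {Q ! 0}. child [P, Q] v"
    proof
      fix v assume v: "v \<in> (set P \<union> set Q) - {Q ! 0}"
      show "child [P, Q] v"
      proof (cases "v \<in> set Q")
        case True
        then obtain a where a: "a < length Q" "v = Q ! a" by (metis in_set_conv_nth)
        then have "a \<noteq> 0" using v by (metis DiffD2 singletonI)
        then have "Suc (a - 1) < length Q \<and> v = Q ! Suc (a - 1)" using a by simp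
        then show ?thesis unfolding child_def by force
      next
        case False
        then have "v \<in> set P" using v by blast
        then obtain b where b: "b < length P" "v = P ! b" by (metis in_set_conv_nth)
        show ?thesis
        proof (cases "b = 0")
          case True
          then have "v = Q ! (j - i)" using b p0 by simp
          then have "j - i \<noteq> 0" using v by auto
          then obtain c where c: "j - i = Suc c" by (cases "j - i") auto
          then have "Suc c < length Q \<and> v = Q ! Suc c" using ij \<open>v = Q ! (j - i)\<close> by auto
          then show ?thesis unfolding child_def by force
        next
          case False
          then have "Suc (b - 1) < length P \<and> v = P ! Suc (b - 1)" using b by simp
          then show ?thesis unfolding child_def by force
        qed
      qed
    qed
    ultimately show ?thesis by blast
  qed
qed

lemma single_cov:
  assumes "L \<noteq> []"
  shows "\<forall>v\<in>set L - {L ! 0}. child [L] v"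
proof
  fix v assume v: "v \<in> set L - {L ! 0}"
  then obtain a where a: "a < length L" "v = L ! a" by (metis DiffD1 in_set_conv_nth)
  then have "a \<noteq> 0" using v by (metis DiffD2 singletonI)
  then have "Suc (a - 1) < length L \<and> v = L ! Suc (a - 1)" using a by simp
  then show "child [L] v" unfolding child_def by force
qed

definition pforest :: "nat list list \<Rightarrow> nat \<Rightarrow> nat option" where
  "pforest Ls v = (if child Ls v then Some (SOME u. \<exists>L\<in>set Ls. \<exists>i. Suc i < length L \<and> v = L ! Suc i \<and> u = L ! i) else None)"

lemma pforest_ok:
  assumes sub: "\<forall>L\<in>set Ls. set L \<subseteq> {1..n}"
    and cons: "\<forall>L\<in>set Ls. \<forall>L'\<in>set Ls. \<forall>i j. Suc i < length L \<longrightarrow> Suc j < length L' \<longrightarrow> L ! Suc i = L' ! Suc j \<longrightarrow> L ! i = L' ! j"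
    and rk: "\<forall>L\<in>set Ls. \<forall>i. Suc i < length L \<longrightarrow> (e::nat\<Rightarrow>nat) (L ! i) < e (L ! Suc i)"
  shows "pforest Ls \<in> forests n" "allc (pforest Ls) Ls"
proof -
  have val: "pforest Ls (L ! Suc i) = Some (L ! i)" if "L \<in> set Ls" "Suc i < length L" for L i
  proof -
    have c: "child Ls (L ! Suc i)" using that unfolding child_def by blast
    have ex: "\<exists>u. \<exists>L'\<in>set Ls. \<exists>i'. Suc i' < length L' \<and> L ! Suc i = L' ! Suc i' \<and> u = L' ! i'" using that by blast
    have "\<exists>L'\<in>set Ls. \<exists>i'. Suc i' < length L' \<and> L ! Suc i = L' ! Suc i' \<and> (SOME u. \<exists>L'\<in>set Ls. \<exists>i'. Suc i' < length L' \<and> L ! Suc i = L' ! Suc i' \<and> u = L' ! i') = L' ! i'"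
      using someI_ex[OF ex] by blast
    then obtain L' i' where L': "L' \<in> set Ls" "Suc i' < length L'" "L ! Suc i = L' ! Suc i'"
      "(SOME u. \<exists>L'\<in>set Ls. \<exists>i'. Suc i' < length L' \<and> L ! Suc i = L' ! Suc i' \<and> u = L' ! i') = L' ! i'" by blast
    have "L ! i = L' ! i'" using cons that L' by blast
    then show ?thesis unfolding pforest_def using c L' by simp
  qed
  show "allc (pforest Ls) Ls" unfolding allc_def cont_def using val by blast
  have dec: "\<forall>v u. pforest Ls v = Some u \<longrightarrow> e u < e v"
  proof (intro allI impI)
    fix v u assume pv: "pforest Ls v = Some u"
    then have "child Ls v" unfolding pforest_def by (simp split: if_splits)
    then obtain L i where L: "L \<in> set Ls" "Suc i < length L" "v = L ! Suc i" unfolding child_def by blast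
    then have "u = L ! i" using val pv by simp
    then show "e u < e v" using rk L by blast
  qed
  have c1: "\<forall>v. v \<notin> {1..n} \<longrightarrow> pforest Ls v = None"
  proof (intro allI impI)
    fix v assume v: "v \<notin> {1..n}"
    have "\<not> child Ls v"
    proof
      assume "child Ls v"
      then obtain L i where L: "L \<in> set Ls" "Suc i < length L" "v = L ! Suc i" unfolding child_def by blast
      then have "v \<in> set L" by simp
      then show False using sub L v by blast
    qed
    then show "pforest Ls v = None" unfolding pforest_def by simp
  qed
  have c2: "\<forall>v u. pforest Ls v = Some u \<longrightarrow> u \<in> {1..n}"
  proof (intro allI impI)
    fix v u assume pv: "pforest Ls v = Some u"
    then have "child Ls v" unfolding pforest_def by (simp split: if_splits)
    then obtain L i where L: "L \<in> set Ls" "Suc i < length L" "v = L ! Suc i" unfolding child_def by blast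
    then have "u = L ! i" using val pv by simp
    then show "u \<in> {1..n}" using sub L by force
  qed
  show "pforest Ls \<in> forests n" using forests_iff c1 c2 dec unfolding is_forest_def by blast
qed

lemma path_forest:
  assumes "distinct L" "set L \<subseteq> {1..n}"
  shows "\<exists>p\<in>forests n. cont p L"
proof -
  define e where "e v = (LEAST j. L ! j = v)" for v
  have ei: "i < length L \<Longrightarrow> e (L ! i) = i" for i
  proof -
    assume i: "i < length L"
    have "(LEAST j. L ! j = L ! i) = i"
    proof (rule Least_equality)
      fix y assume y: "L ! y = L ! i"
      show "i \<le> y"
      proof (rule ccontr)
        assume "\<not> i \<le> y"
        then have "y < i" by simp
        then show False using y i assms(1) by (simp add: nth_eq_iff_index_eq)
      qed
    qed simp
    then show ?thesis unfolding e_def .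
  qed
  have cons: "\<forall>L1\<in>set [L]. \<forall>L'\<in>set [L]. \<forall>i j. Suc i < length L1 \<longrightarrow> Suc j < length L' \<longrightarrow> L1 ! Suc i = L' ! Suc j \<longrightarrow> L1 ! i = L' ! j"
    using assms(1) by (simp add: nth_eq_iff_index_eq)
  have rk: "\<forall>L1\<in>set [L]. \<forall>i. Suc i < length L1 \<longrightarrow> e (L1 ! i) < e (L1 ! Suc i)"
    using ei by simp
  have "pforest [L] \<in> forests n" "allc (pforest [L]) [L]"
    using pforest_ok[OF _ cons rk] assms(2) by auto
  then show ?thesis unfolding allc_def by auto
qed


definition DJ :: "nat list \<Rightarrow> nat \<Rightarrow> (nat list \<times> nat list) set" where
  "DJ pi n = {x \<in> Pairs pi n. set (fst x) \<inter> set (snd x) = {}}"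

definition SHU :: "nat list \<Rightarrow> nat \<Rightarrow> nat set \<Rightarrow> (nat list \<times> nat list) set" where
  "SHU pi n U = {x \<in> Pairs pi n. set (fst x) \<inter> set (snd x) \<noteq> {} \<and> set (fst x) \<union> set (snd x) = U}"

definition Aset :: "nat list \<Rightarrow> nat \<Rightarrow> nat set \<Rightarrow> (nat list \<times> nat list) set" where
  "Aset pi n U = {x \<in> Pairs pi n. set (fst x) \<inter> set (snd x) \<noteq> {} \<and> set (fst x) \<union> set (snd x) = U
      \<and> 0 < FF n (fst x) (snd x)}"

lemma FF_pos_iff: "0 < FF n P Q \<longleftrightarrow> (\<exists>p\<in>forests n. cont p P \<and> cont p Q)"
  unfolding FF_def using finite_forests by (subst card_gt_0_iff) auto

lemma FF_disj_le:
  assumes P: "distinct P" "P \<noteq> []" "set P \<subseteq> {1..n}" and Q: "distinct Q" "Q \<noteq> []" "set Q \<subseteq> {1..n}"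
    and P': "distinct P'" "set P' = set P" and Q': "distinct Q'" "set Q' = set Q"
    and dj: "set P \<inter> set Q = {}"
  shows "FF n P Q \<le> FF n P' Q'"
proof -
  have P'ne: "P' \<noteq> []" using P'(2) P(2) by auto
  have Q'ne: "Q' \<noteq> []" using Q'(2) Q(2) by auto
  have "\<exists>p\<in>forests n. cont p P'" using path_forest[OF P'(1)] P'(2) P(3) by simp
  then obtain p1 where p1: "p1 \<in> forests n" "cont p1 P'" by blast
  have "\<exists>p\<in>forests n. cont p Q'" using path_forest[OF Q'(1)] Q'(2) Q(3) by simp
  then obtain p2 where p2: "p2 \<in> forests n" "cont p2 Q'" by blast
  have s1: "card {p \<in> forests n. allc p [P] \<and> allc p [Q]} \<le> card {p \<in> forests n. allc p [P'] \<and> allc p [Q]}"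
  proof (rule swap_card[where U = "set P" and r = "P ! 0" and r' = "P' ! 0" and pz = p1])
    show "set P \<subseteq> {1..n}" by (rule P(3))
    show "P ! 0 \<in> set P" using P(2) by simp
    show "P' ! 0 \<in> set P" using P'ne P'(2) nth_mem by (metis length_greater_0_conv)
    show "\<forall>v\<in>set P - {P ! 0}. child [P] v" by (rule single_cov[OF P(2)])
    show "\<forall>L\<in>set [P]. set L \<subseteq> set P" by simp
    show "p1 \<in> forests n" by (rule p1(1))
    show "allc p1 [P']" using p1 unfolding allc_def by simp
    show "\<forall>v\<in>set P - {P' ! 0}. child [P'] v" using single_cov[OF P'ne] P'(2) by simp
    show "\<forall>L\<in>set [P']. set L \<subseteq> set P" using P'(2) by simp
    show "\<forall>K\<in>set [Q]. \<forall>i. Suc i < length K \<longrightarrow> K ! Suc i \<notin> set P" using dj by auto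
  qed
  have s2: "card {p \<in> forests n. allc p [Q] \<and> allc p [P']} \<le> card {p \<in> forests n. allc p [Q'] \<and> allc p [P']}"
  proof (rule swap_card[where U = "set Q" and r = "Q ! 0" and r' = "Q' ! 0" and pz = p2])
    show "set Q \<subseteq> {1..n}" by (rule Q(3))
    show "Q ! 0 \<in> set Q" using Q(2) by simp
    show "Q' ! 0 \<in> set Q" using Q'ne Q'(2) nth_mem by (metis length_greater_0_conv)
    show "\<forall>v\<in>set Q - {Q ! 0}. child [Q] v" by (rule single_cov[OF Q(2)])
    show "\<forall>L\<in>set [Q]. set L \<subseteq> set Q" by simp
    show "p2 \<in> forests n" by (rule p2(1))
    show "allc p2 [Q']" using p2 unfolding allc_def by simp
    show "\<forall>v\<in>set Q - {Q' ! 0}. child [Q'] v" using single_cov[OF Q'ne] Q'(2) by simp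
    show "\<forall>L\<in>set [Q']. set L \<subseteq> set Q" using Q'(2) by simp
    show "\<forall>K\<in>set [P']. \<forall>i. Suc i < length K \<longrightarrow> K ! Suc i \<notin> set Q" using dj P'(2) by auto
  qed
  have e1: "FF n P Q = card {p \<in> forests n. allc p [P] \<and> allc p [Q]}" unfolding FF_def allc_def by simp
  have e2: "{p \<in> forests n. allc p [P'] \<and> allc p [Q]} = {p \<in> forests n. allc p [Q] \<and> allc p [P']}" by auto
  have e3: "FF n P' Q' = card {p \<in> forests n. allc p [Q'] \<and> allc p [P']}" unfolding FF_def allc_def by (simp add: conj_commute)
  show ?thesis using s1 s2 e1 e2 e3 by simp
qed

lemma Pairs_mem:
  assumes "x \<in> Pairs pi n" "is_pattern pi"
  shows "ordd pi (fst x)" "ordd pi (snd x)" "set (fst x) \<subseteq> {1..n}" "set (snd x) \<subseteq> {1..n}"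
    "fst x \<noteq> snd x" "distinct (fst x)" "distinct (snd x)"
  using assms ordd_distinct unfolding Pairs_def Cand_def by auto

lemma DJ_sum:
  assumes pat: "is_pattern pi" "is_pattern pi'" and len: "length pi = length pi'"
  shows "(\<Sum>x\<in>DJ pi n. FF n (fst x) (snd x)) = (\<Sum>x\<in>DJ pi' n. FF n (fst x) (snd x))"
proof -
  define f where "f x = (arr pi' (set (fst x)), arr pi' (set (snd x)))" for x :: "nat list \<times> nat list"
  define g where "g x = (arr pi (set (fst x)), arr pi (set (snd x)))" for x :: "nat list \<times> nat list"
  have maps: "(\<lambda>x. (arr s' (set (fst x)), arr s' (set (snd x)))) ` DJ s n \<subseteq> DJ s' n
      \<and> (\<forall>x\<in>DJ s n. FF n (fst x) (snd x) \<le> FF n (arr s' (set (fst x))) (arr s' (set (snd x))))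
      \<and> (\<forall>x\<in>DJ s n. arr s (set (arr s' (set (fst x)))) = fst x \<and> arr s (set (arr s' (set (snd x)))) = snd x)"
    if ps: "is_pattern s" "is_pattern s'" and ls: "length s = length s'" for s s'
  proof (intro conjI ballI subsetI)
    fix x assume x: "x \<in> DJ s n"
    then have xp: "x \<in> Pairs s n" and dj: "set (fst x) \<inter> set (snd x) = {}" unfolding DJ_def by auto
    note m = Pairs_mem[OF xp ps(1)]
    have c1: "card (set (fst x)) = length s'" using ordd_card_set[OF m(1) ps(1)] ls by simp
    have c2: "card (set (snd x)) = length s'" using ordd_card_set[OF m(2) ps(1)] ls by simp
    note a1 = arr_props[OF ps(2) finite_set c1] and a2 = arr_props[OF ps(2) finite_set c2]
    show "arr s (set (arr s' (set (fst x)))) = fst x" using a1(2) ordd_eq_arr[OF m(1) ps(1)] by simp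
    show "arr s (set (arr s' (set (snd x)))) = snd x" using a2(2) ordd_eq_arr[OF m(2) ps(1)] by simp
    have ne: "set (fst x) \<noteq> set (snd x)" using ordd_unique[OF m(1) m(2) ps(1)] m(5) by blast
    have fne: "fst x \<noteq> []"
    proof
      assume "fst x = []"
      then have "snd x \<noteq> []" using m(5) by auto
      then have "length s \<noteq> 0" using ordd_len[OF m(2)] by (metis length_0_conv)
      then show False using ordd_len[OF m(1)] \<open>fst x = []\<close> by simp
    qed
    have sne: "snd x \<noteq> []" using fne ordd_len[OF m(1)] ordd_len[OF m(2)] by auto
    show "FF n (fst x) (snd x) \<le> FF n (arr s' (set (fst x))) (arr s' (set (snd x)))"
      by (rule FF_disj_le[OF m(6) fne m(3) m(7) sne m(4) ordd_distinct[OF a1(1) ps(2)] a1(2)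
          ordd_distinct[OF a2(1) ps(2)] a2(2) dj])
  next
    fix y assume "y \<in> (\<lambda>x. (arr s' (set (fst x)), arr s' (set (snd x)))) ` DJ s n"
    then obtain x where x: "x \<in> DJ s n" "y = (arr s' (set (fst x)), arr s' (set (snd x)))" by blast
    then have xp: "x \<in> Pairs s n" and dj: "set (fst x) \<inter> set (snd x) = {}" unfolding DJ_def by auto
    note m = Pairs_mem[OF xp ps(1)]
    have c1: "card (set (fst x)) = length s'" using ordd_card_set[OF m(1) ps(1)] ls by simp
    have c2: "card (set (snd x)) = length s'" using ordd_card_set[OF m(2) ps(1)] ls by simp
    note a1 = arr_props[OF ps(2) finite_set c1] and a2 = arr_props[OF ps(2) finite_set c2]
    have ne: "set (fst x) \<noteq> set (snd x)" using ordd_unique[OF m(1) m(2) ps(1)] m(5) by blast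
    have i1: "arr s' (set (fst x)) \<in> Cand s' n" unfolding Cand_def using a1(1,2) m(3) by simp
    have i2: "arr s' (set (snd x)) \<in> Cand s' n" unfolding Cand_def using a2(1,2) m(4) by simp
    have i3: "arr s' (set (fst x)) \<noteq> arr s' (set (snd x))" using a1(2) a2(2) ne by metis
    have i4: "set (arr s' (set (fst x))) \<inter> set (arr s' (set (snd x))) = {}" using a1(2) a2(2) dj by simp
    show "y \<in> DJ s' n" unfolding DJ_def Pairs_def using x(2) i1 i2 i3 i4 by simp
  qed
  note fw = maps[OF pat(1) pat(2) len] and bw = maps[OF pat(2) pat(1) len[symmetric]]
  have bij: "bij_betw f (DJ pi n) (DJ pi' n)"
  proof (rule bij_betw_byWitness[where f' = g])
    show "\<forall>a\<in>DJ pi n. g (f a) = a" using fw unfolding f_def g_def by auto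
    show "\<forall>a\<in>DJ pi' n. f (g a) = a" using bw unfolding f_def g_def by auto
    show "f ` DJ pi n \<subseteq> DJ pi' n" using fw unfolding f_def by blast
    show "g ` DJ pi' n \<subseteq> DJ pi n" using bw unfolding g_def by blast
  qed
  have FFeq: "FF n (fst (f x)) (snd (f x)) = FF n (fst x) (snd x)" if x: "x \<in> DJ pi n" for x
  proof -
    have le1: "FF n (fst x) (snd x) \<le> FF n (fst (f x)) (snd (f x))" using fw x unfolding f_def by simp
    have fx: "f x \<in> DJ pi' n" using fw x unfolding f_def by blast
    have le2: "FF n (fst (f x)) (snd (f x)) \<le> FF n (arr pi (set (fst (f x)))) (arr pi (set (snd (f x))))"
      using bw fx by blast
    have e: "arr pi (set (fst (f x))) = fst x" "arr pi (set (snd (f x))) = snd x"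
      using fw x unfolding f_def by auto
    show ?thesis using le1 le2 e by simp
  qed
  have "(\<Sum>x\<in>DJ pi' n. FF n (fst x) (snd x)) = (\<Sum>x\<in>DJ pi n. FF n (fst (f x)) (snd (f x)))"
    using sum.reindex_bij_betw[OF bij, of "\<lambda>y. FF n (fst y) (snd y)"] by simp
  also have "\<dots> = (\<Sum>x\<in>DJ pi n. FF n (fst x) (snd x))" using FFeq by (rule sum.cong[OF refl])
  finally show ?thesis by simp
qed

lemma FF_sh_le:
  assumes U: "set P \<union> set Q = U" "set P' \<union> set Q' = U" "U \<subseteq> {1..n}"
    and i1: "set P \<inter> set Q \<noteq> {}" and i2: "set P' \<inter> set Q' \<noteq> {}"
    and f1: "0 < FF n P Q" and f2: "0 < FF n P' Q'"
  shows "FF n P Q \<le> FF n P' Q'"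
proof -
  obtain p where p: "p \<in> forests n" "cont p P" "cont p Q" using f1 FF_pos_iff by blast
  obtain p0 where p0: "p0 \<in> forests n" "cont p0 P'" "cont p0 Q'" using f2 FF_pos_iff by blast
  obtain r where r: "r \<in> U" "\<forall>v\<in>U - {r}. child [P, Q] v" using root_exists[OF p(2,3) i1] U(1) by blast
  obtain r' where r': "r' \<in> U" "\<forall>v\<in>U - {r'}. child [P', Q'] v" using root_exists[OF p0(2,3) i2] U(2) by blast
  have "card {p \<in> forests n. allc p [P, Q] \<and> allc p []} \<le> card {p \<in> forests n. allc p [P', Q'] \<and> allc p []}"
    by (rule swap_card[OF U(3) r(1) r'(1) r(2) _ p0(1) _ r'(2)]) (use U p0 in \<open>auto simp: allc_def\<close>)
  then show ?thesis unfolding FF_def allc_def by simp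
qed

lemma SHU_sum: "(\<Sum>x\<in>SHU pi n U. FF n (fst x) (snd x)) = (\<Sum>x\<in>Aset pi n U. FF n (fst x) (snd x))"
proof -
  have fin: "finite (SHU pi n U)" using finite_Pairs unfolding SHU_def by simp
  show ?thesis by (rule sum.mono_neutral_right[OF fin]) (auto simp: SHU_def Aset_def)
qed

lemma Aset_const:
  assumes U: "U \<subseteq> {1..n}" and y: "y \<in> Aset pi1 n U \<union> Aset pi2 n U"
  shows "(\<Sum>x\<in>SHU pi n U. FF n (fst x) (snd x)) = card (Aset pi n U) * FF n (fst y) (snd y)"
proof -
  have y': "set (fst y) \<union> set (snd y) = U" "set (fst y) \<inter> set (snd y) \<noteq> {}" "0 < FF n (fst y) (snd y)"
    using y unfolding Aset_def by auto
  have "FF n (fst x) (snd x) = FF n (fst y) (snd y)" if x: "x \<in> Aset pi n U" for x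
  proof -
    have x': "set (fst x) \<union> set (snd x) = U" "set (fst x) \<inter> set (snd x) \<noteq> {}" "0 < FF n (fst x) (snd x)"
      using x unfolding Aset_def by auto
    show ?thesis using FF_sh_le[OF x'(1) y'(1) U x'(2) y'(2) x'(3) y'(3)]
        FF_sh_le[OF y'(1) x'(1) U y'(2) x'(2) y'(3) x'(3)] by simp
  qed
  then have "(\<Sum>x\<in>Aset pi n U. FF n (fst x) (snd x)) = (\<Sum>x\<in>Aset pi n U. FF n (fst y) (snd y))"
    by (rule sum.cong[OF refl])
  then show ?thesis using SHU_sum by simp
qed

lemma Wt_split:
  "Wt pi n = (\<Sum>x\<in>DJ pi n. FF n (fst x) (snd x)) + (\<Sum>U\<in>Pow {1..n}. \<Sum>x\<in>SHU pi n U. FF n (fst x) (snd x))"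
proof -
  let ?h = "\<lambda>x. FF n (fst x) (snd x)"
  define SH where "SH = {x \<in> Pairs pi n. set (fst x) \<inter> set (snd x) \<noteq> {}}"
  have fP: "finite (Pairs pi n)" by (rule finite_Pairs)
  have un: "Pairs pi n = DJ pi n \<union> SH" unfolding DJ_def SH_def by auto
  have fD: "finite (DJ pi n)" using fP unfolding DJ_def by simp
  have fS: "finite SH" using fP unfolding SH_def by simp
  have "Wt pi n = sum ?h (DJ pi n) + sum ?h SH"
    unfolding Wt_def un by (rule sum.union_disjoint[OF fD fS]) (auto simp: DJ_def SH_def)
  moreover have "sum ?h SH = (\<Sum>U\<in>Pow {1..n}. sum ?h {x. x \<in> SH \<and> set (fst x) \<union> set (snd x) = U})"
  proof (rule sum.group[symmetric, OF fS])
    show "finite (Pow {1..n})" by simp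
    show "(\<lambda>x. set (fst x) \<union> set (snd x)) ` SH \<subseteq> Pow {1..n}"
      unfolding SH_def Pairs_def Cand_def by auto
  qed
  moreover have "{x. x \<in> SH \<and> set (fst x) \<union> set (snd x) = U} = SHU pi n U" for U
    unfolding SH_def SHU_def by auto
  ultimately show ?thesis by simp
qed

lemma transfer_Aset:
  assumes x: "x \<in> Aset pi n V" and h: "strict_mono_on V h" and V: "V \<subseteq> {1..n}"
    and V': "h ` V = V'" "V' \<subseteq> {1..n'}"
  shows "(map h (fst x), map h (snd x)) \<in> Aset pi n' V'"
proof -
  obtain P Q where PQ: "x = (P, Q)" by (cases x)
  have xm: "P \<in> Cand pi n" "Q \<in> Cand pi n" "P \<noteq> Q" "set P \<inter> set Q \<noteq> {}" "set P \<union> set Q = V" "0 < FF n P Q"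
    using x PQ unfolding Aset_def Pairs_def by auto
  have inj: "inj_on h V" using h strict_mono_on_imp_inj_on by blast
  have sP: "set P \<subseteq> V" "set Q \<subseteq> V" using xm(5) by auto
  have hP: "strict_mono_on (set P) h" by (rule strict_mono_onI) (use sP h in \<open>auto dest: strict_mono_onD\<close>)
  have hQ: "strict_mono_on (set Q) h" by (rule strict_mono_onI) (use sP h in \<open>auto dest: strict_mono_onD\<close>)
  have o1: "ordd pi (map h P)" using ordd_map_mono[OF _ hP] xm(1) unfolding Cand_def by simp
  have o2: "ordd pi (map h Q)" using ordd_map_mono[OF _ hQ] xm(2) unfolding Cand_def by simp
  have s1: "set (map h P) \<subseteq> {1..n'}" "set (map h Q) \<subseteq> {1..n'}" using sP V' by auto
  have ne: "map h P \<noteq> map h Q"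
  proof
    assume "map h P = map h Q"
    then have "P = Q" using inj sP by (metis inj_on_map_eq_map inj_on_subset le_sup_iff xm(5) subset_refl)
    then show False using xm(3) by simp
  qed
  have int: "set (map h P) \<inter> set (map h Q) \<noteq> {}" using xm(4) by auto
  have uni: "set (map h P) \<union> set (map h Q) = V'" using xm(5) V'(1) by (simp add: image_Un[symmetric])
  obtain p where p: "p \<in> forests n" "cont p P" "cont p Q" using xm(6) FF_pos_iff by blast
  have Fp: "is_forest n p" using p forests_iff by blast
  have "rlb V h p \<in> forests n'" using rlb_forest[OF Fp inj] V' forests_iff by blast
  moreover have "cont (rlb V h p) (map h P)" "cont (rlb V h p) (map h Q)"
    using rlb_cont[OF p(2) sP(1) inj] rlb_cont[OF p(3) sP(2) inj] by auto
  ultimately have "0 < FF n' (map h P) (map h Q)" using FF_pos_iff by blast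
  then show ?thesis unfolding Aset_def Pairs_def Cand_def using PQ o1 o2 s1 ne int uni by auto
qed

lemma relabel_Aset:
  assumes U: "U \<subseteq> {1..n}"
  shows "card (Aset pi n U) = card (Aset pi (card U) {1..card U})"
proof -
  have fU: "finite U" using U finite_subset by blast
  define u where "u = card U"
  define f where "f x = card {y \<in> U. y \<le> x}" for x
  have smf: "strict_mono_on U f"
  proof (rule strict_mono_onI)
    fix a b assume a: "a \<in> U" and b: "b \<in> U" and ab: "a < b"
    have "b \<in> {y \<in> U. y \<le> b}" "b \<notin> {y \<in> U. y \<le> a}" using ab b by auto
    moreover have "{y \<in> U. y \<le> a} \<subseteq> {y \<in> U. y \<le> b}" using ab by auto
    ultimately have "{y \<in> U. y \<le> a} \<subset> {y \<in> U. y \<le> b}" by blast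
    then show "f a < f b" unfolding f_def using fU by (intro psubset_card_mono) auto
  qed
  have injf: "inj_on f U" using smf strict_mono_on_imp_inj_on by blast
  have fimg: "f ` U = {1..u}"
  proof (rule card_subset_eq)
    show "finite {1..u}" by simp
    show "f ` U \<subseteq> {1..u}"
    proof
      fix z assume "z \<in> f ` U"
      then obtain a where a: "a \<in> U" "z = f a" by blast
      have "a \<in> {y \<in> U. y \<le> a}" using a by simp
      then have "card {y \<in> U. y \<le> a} > 0" using fU by (subst card_gt_0_iff) auto
      then have "1 \<le> z" unfolding a(2) f_def by simp
      moreover have "z \<le> u" unfolding a(2) f_def u_def using fU by (intro card_mono) auto
      ultimately show "z \<in> {1..u}" by simp
    qed
    show "card (f ` U) = card {1..u}" using card_image[OF injf] u_def by simp
  qed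
  define g where "g = the_inv_into U f"
  have gimg: "g ` {1..u} = U" unfolding g_def using the_inv_into_onto[OF injf] fimg by simp
  have gf: "a \<in> U \<Longrightarrow> g (f a) = a" for a unfolding g_def using the_inv_into_f_f[OF injf] by simp
  have fg: "z \<in> {1..u} \<Longrightarrow> f (g z) = z" for z unfolding g_def using f_the_inv_into_f[OF injf] fimg by simp
  have smg: "strict_mono_on {1..u} g"
  proof (rule strict_mono_onI)
    fix a b assume a: "a \<in> {1..u}" and b: "b \<in> {1..u}" and ab: "a < b"
    have ga: "g a \<in> U" and gb: "g b \<in> U" using a b gimg by auto
    show "g a < g b"
    proof (rule ccontr)
      assume "\<not> g a < g b"
      then have "g b < g a \<or> g b = g a" by arith
      then show False
      proof
        assume "g b < g a"
        then have "f (g b) < f (g a)" using strict_mono_onD[OF smf gb ga] by simp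
        then show False using fg[OF a] fg[OF b] ab by simp
      next
        assume "g b = g a"
        then have "f (g b) = f (g a)" by simp
        then show False using fg[OF a] fg[OF b] ab by simp
      qed
    qed
  qed
  define F where "F x = (map f (fst x), map f (snd x))" for x :: "nat list \<times> nat list"
  define G where "G x = (map g (fst x), map g (snd x))" for x :: "nat list \<times> nat list"
  have bij: "bij_betw F (Aset pi n U) (Aset pi u {1..u})"
  proof (rule bij_betw_byWitness[where f' = G])
    show "\<forall>a\<in>Aset pi n U. G (F a) = a"
    proof
      fix a assume "a \<in> Aset pi n U"
      then have "set (fst a) \<subseteq> U" "set (snd a) \<subseteq> U" unfolding Aset_def by auto
      then show "G (F a) = a" unfolding F_def G_def using gf by (cases a) (auto simp: map_idI subset_iff)
    qed
    show "\<forall>a\<in>Aset pi u {1..u}. F (G a) = a"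
    proof
      fix a assume "a \<in> Aset pi u {1..u}"
      then have "set (fst a) \<subseteq> {1..u}" "set (snd a) \<subseteq> {1..u}" unfolding Aset_def by auto
      then show "F (G a) = a" unfolding F_def G_def using fg by (cases a) (auto simp: map_idI subset_iff)
    qed
    show "F ` Aset pi n U \<subseteq> Aset pi u {1..u}"
      using transfer_Aset[OF _ smf U fimg] unfolding F_def by auto
    show "G ` Aset pi u {1..u} \<subseteq> Aset pi n U"
      using transfer_Aset[OF _ smg _ gimg U] unfolding G_def by auto
  qed
  then show ?thesis using bij_betw_same_card u_def by blast
qed

lemma triangular:
  assumes pat: "is_pattern pi" "is_pattern pi'" and len: "length pi = length pi'"
    and W: "\<forall>n. Wt pi n = Wt pi' n"
  shows "card (Aset pi u {1..u}) = card (Aset pi' u {1..u})"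
proof (induction u rule: less_induct)
  case (less u)
  let ?S = "\<lambda>s U. \<Sum>x\<in>SHU s u U. FF u (fst x) (snd x)"
  have eqU: "?S pi U = ?S pi' U" if U: "U \<in> Pow {1..u} - {{1..u}}" for U
  proof -
    have Us: "U \<subseteq> {1..u}" using U by blast
    have "U \<subset> {1..u}" using U by blast
    then have cu: "card U < u" using psubset_card_mono[of "{1..u}" U] by simp
    have ca: "card (Aset pi u U) = card (Aset pi' u U)"
      using relabel_Aset[OF Us, where pi = pi] relabel_Aset[OF Us, where pi = pi'] less[OF cu] by simp
    show ?thesis
    proof (cases "Aset pi u U \<union> Aset pi' u U = {}")
      case True
      then have "Aset pi u U = {}" "Aset pi' u U = {}" by auto
      then show ?thesis using SHU_sum[where pi = pi and n = u and U = U] SHU_sum[where pi = pi' and n = u and U = U] by simp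
    next
      case False
      then obtain y where y: "y \<in> Aset pi u U \<union> Aset pi' u U" by blast
      show ?thesis using Aset_const[OF Us y, where pi = pi] Aset_const[OF Us y, where pi = pi'] ca by simp
    qed
  qed
  have tot: "(\<Sum>U\<in>Pow {1..u}. ?S pi U) = (\<Sum>U\<in>Pow {1..u}. ?S pi' U)"
    using W Wt_split[where pi = pi and n = u] Wt_split[where pi = pi' and n = u] DJ_sum[OF pat len, where n = u] by simp
  have fin: "finite (Pow {1..u::nat})" by simp
  have mem: "{1..u} \<in> Pow {1..u}" by simp
  have r1: "(\<Sum>U\<in>Pow {1..u}. ?S pi U) = ?S pi {1..u} + (\<Sum>U\<in>Pow {1..u} - {{1..u}}. ?S pi U)"
    by (rule sum.remove[OF fin mem])
  have r2: "(\<Sum>U\<in>Pow {1..u}. ?S pi' U) = ?S pi' {1..u} + (\<Sum>U\<in>Pow {1..u} - {{1..u}}. ?S pi' U)"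
    by (rule sum.remove[OF fin mem])
  have "(\<Sum>U\<in>Pow {1..u} - {{1..u}}. ?S pi U) = (\<Sum>U\<in>Pow {1..u} - {{1..u}}. ?S pi' U)"
    using eqU by (rule sum.cong[OF refl])
  then have Seq: "?S pi {1..u} = ?S pi' {1..u}" using tot r1 r2 by simp
  show ?case
  proof (cases "Aset pi u {1..u} \<union> Aset pi' u {1..u} = {}")
    case True then show ?thesis by auto
  next
    case False
    then obtain y where y: "y \<in> Aset pi u {1..u} \<union> Aset pi' u {1..u}" by blast
    have c: "0 < FF u (fst y) (snd y)" using y unfolding Aset_def by auto
    show ?thesis using Aset_const[OF _ y, where pi = pi] Aset_const[OF _ y, where pi = pi'] Seq c by simp
  qed
qed


definition Al :: "nat \<Rightarrow> nat \<Rightarrow> nat list \<Rightarrow> nat list \<Rightarrow> bool" where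
  "Al ov s P Q \<longleftrightarrow> (\<forall>j<ov. s + j < length P \<and> Q ! j = P ! (s + j)) \<and>
      (\<forall>j. ov \<le> j \<and> j < length Q \<longrightarrow> Q ! j \<notin> set P)"

lemma rank_path:
  assumes d: "\<forall>v u. p v = Some u \<longrightarrow> (d::nat\<Rightarrow>nat) u < d v" and c: "cont p L"
  shows "a < b \<Longrightarrow> b < length L \<Longrightarrow> d (L ! a) < d (L ! b)"
proof (induction b)
  case 0 then show ?case by simp
next
  case (Suc b)
  have "p (L ! Suc b) = Some (L ! b)" using c Suc.prems unfolding cont_def by blast
  then have "d (L ! b) < d (L ! Suc b)" using d by blast
  moreover have "a < b \<Longrightarrow> d (L ! a) < d (L ! b)" using Suc by simp
  ultimately show ?case using Suc.prems by (cases "a = b") auto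
qed

lemma downclosed_eq:
  assumes "finite J" "\<forall>j\<in>J. \<forall>j'\<le>j. j' \<in> (J::nat set)"
  shows "J = {..<card J}"
proof -
  have "j < card J" if "j \<in> J" for j
  proof -
    have "{..j} \<subseteq> J" using assms(2) that by auto
    then have "card {..j} \<le> card J" using assms(1) card_mono by blast
    then show ?thesis by simp
  qed
  then have "J \<subseteq> {..<card J}" by auto
  then show ?thesis using card_subset_eq[of "{..<card J}" J] by simp
qed

lemma align_from_forest:
  assumes F: "is_forest n p" and cP: "cont p P" and cQ: "cont p Q"
    and dP: "distinct P" and dQ: "distinct Q" and l: "length P = k" "length Q = k"
    and s: "s < k" and q0: "Q ! 0 = P ! s" and ov: "card (set P \<inter> set Q) = ov"
  shows "Al ov s P Q"
proof -
  obtain d :: "nat \<Rightarrow> nat" where d: "\<forall>v u. p v = Some u \<longrightarrow> d u < d v" using F unfolding is_forest_def by blast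
  have k0: "0 < k" using s by simp
  have a: "s + j < k \<and> Q ! j = P ! (s + j)" if j: "j < k" "Q ! j \<in> set P" for j
  proof -
    obtain i where i: "i < k" "Q ! j = P ! i" using j(2) l by (metis in_set_conv_nth)
    show ?thesis
    proof (cases "j \<le> i")
      case True
      have "P ! (i - j) = Q ! (j - j)" using climb[OF cP cQ _ _ i(2)[symmetric], of j] i j l True by simp
      then have "P ! (i - j) = P ! s" using q0 by simp
      then have "i - j = s" using dP i s l by (simp add: nth_eq_iff_index_eq)
      then show ?thesis using True i by auto
    next
      case False
      have e: "P ! (i - i) = Q ! (j - i)" using climb[OF cP cQ _ _ i(2)[symmetric], of i] i j l False by simp
      have "d (Q ! 0) < d (Q ! (j - i))" using rank_path[OF d cQ, of 0 "j - i"] False j l by simp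
      then have "d (Q ! 0) < d (P ! 0)" using e by simp
      moreover have "d (P ! 0) \<le> d (P ! s)" using rank_path[OF d cP, of 0 s] s l by (cases "s = 0") auto
      ultimately show ?thesis using q0 by simp
    qed
  qed
  define J where "J = {j. j < k \<and> Q ! j \<in> set P}"
  have fJ: "finite J" unfolding J_def by simp
  have dc: "\<forall>j\<in>J. \<forall>j'\<le>j. j' \<in> J"
  proof (intro ballI allI impI)
    fix j j' assume jJ: "j \<in> J" and jj: "j' \<le> j"
    then have j: "j < k" "Q ! j \<in> set P" unfolding J_def by auto
    have e: "s + j < k" "Q ! j = P ! (s + j)" using a[OF j] by auto
    have "P ! (s + j - (j - j')) = Q ! (j - (j - j'))"
      using climb[OF cP cQ _ _ e(2)[symmetric], of "j - j'"] e j l by simp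
    then have "Q ! j' = P ! (s + j')" using jj by simp
    moreover have "s + j' < k" using e jj by simp
    ultimately show "j' \<in> J" unfolding J_def using jj j l by auto
  qed
  have cJ: "card J = ov"
  proof -
    have "card J = card {x \<in> set Q. x \<in> set P}" unfolding J_def using card_idx_filter[OF dQ, of "\<lambda>x. x \<in> set P"] l by simp
    also have "{x \<in> set Q. x \<in> set P} = set P \<inter> set Q" by auto
    finally show ?thesis using ov by simp
  qed
  have Jeq: "J = {..<ov}" using downclosed_eq[OF fJ dc] cJ by simp
  show ?thesis unfolding Al_def
  proof (intro conjI allI impI)
    fix j assume "j < ov"
    then have "j \<in> J" using Jeq by simp
    then have "j < k" "Q ! j \<in> set P" unfolding J_def by auto
    then show "s + j < length P" "Q ! j = P ! (s + j)" using a l by auto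
  next
    fix j assume "ov \<le> j \<and> j < length Q"
    then have "j \<notin> J" using Jeq by simp
    then show "Q ! j \<notin> set P" using \<open>ov \<le> j \<and> j < length Q\<close> l unfolding J_def by auto
  qed
qed

lemma Aset_classify:
  assumes x: "x \<in> Aset pi u {1..u}" and pat: "is_pattern pi" and k: "length pi = k" and uo: "u + ov = 2 * k"
  shows "(\<exists>s<k. Al ov s (fst x) (snd x)) \<or> (\<exists>s<k. 0 < s \<and> Al ov s (snd x) (fst x))"
proof -
  obtain P Q where PQ: "x = (P, Q)" by (cases x)
  have xp: "x \<in> Pairs pi u" and int: "set P \<inter> set Q \<noteq> {}" and un: "set P \<union> set Q = {1..u}"
    and ff: "0 < FF u P Q" using x PQ unfolding Aset_def by auto
  note m = Pairs_mem[OF xp pat]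
  have dP: "distinct P" and dQ: "distinct Q" using m PQ by auto
  have lP: "length P = k" and lQ: "length Q = k" using m(1,2) PQ ordd_len k by auto
  obtain p where p: "p \<in> forests u" "cont p P" "cont p Q" using ff FF_pos_iff by blast
  have F: "is_forest u p" using p forests_iff by blast
  have co: "card (set P \<inter> set Q) = ov"
  proof -
    have "card (set P \<union> set Q) + card (set P \<inter> set Q) = card (set P) + card (set Q)"
      using card_Un_Int[of "set P" "set Q"] by simp
    then show ?thesis using un distinct_card[OF dP] distinct_card[OF dQ] lP lQ uo by simp
  qed
  obtain y where "y \<in> set P" "y \<in> set Q" using int by blast
  then obtain i j where ij: "i < k" "j < k" "P ! i = Q ! j" using lP lQ by (metis in_set_conv_nth)
  show ?thesis
  proof (cases "j \<le> i")
    case True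
    have "P ! (i - j) = Q ! (j - j)" using climb[OF p(2) p(3) _ _ ij(3), of j] ij lP lQ True by simp
    then have "Q ! 0 = P ! (i - j)" by simp
    then have "Al ov (i - j) P Q" using align_from_forest[OF F p(2,3) dP dQ lP lQ _ _ co] ij by simp
    then show ?thesis using PQ ij by (intro disjI1) (rule exI[of _ "i - j"], simp)
  next
    case False
    have "P ! (i - i) = Q ! (j - i)" using climb[OF p(2) p(3) _ _ ij(3), of i] ij lP lQ False by simp
    then have "P ! 0 = Q ! (j - i)" by simp
    moreover have co': "card (set Q \<inter> set P) = ov" using co by (simp add: Int_commute)
    ultimately have "Al ov (j - i) Q P" using align_from_forest[OF F p(3,2) dQ dP lQ lP _ _ co'] ij by simp
    then show ?thesis using PQ ij False by (intro disjI2) (rule exI[of _ "j - i"], simp)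
  qed
qed


lemma dist_idx: "distinct L \<Longrightarrow> i < length L \<Longrightarrow> j < length L \<Longrightarrow> L ! i = L ! j \<Longrightarrow> i = j"
  by (simp add: nth_eq_iff_index_eq)

lemma nth0_mem: "0 < length L \<Longrightarrow> L ! 0 \<in> set L"
  by simp

definition idx :: "nat list \<Rightarrow> nat \<Rightarrow> nat" where
  "idx L v = (LEAST j. L ! j = v)"

lemma idx_nth: "distinct L \<Longrightarrow> i < length L \<Longrightarrow> idx L (L ! i) = i"
  unfolding idx_def
proof (rule Least_equality)
  fix y assume d: "distinct L" and i: "i < length L" and y: "L ! y = L ! i"
  show "i \<le> y"
  proof (rule ccontr)
    assume "\<not> i \<le> y"
    then have "y < i" by simp
    then show False using y i d by (simp add: nth_eq_iff_index_eq)
  qed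
qed simp

lemma al_forest:
  assumes al: "Al ov s P Q" and dP: "distinct P" and dQ: "distinct Q"
    and l: "length P = k" "length Q = k" and sub: "set P \<subseteq> {1..n}" "set Q \<subseteq> {1..n}"
  shows "\<exists>p\<in>forests n. cont p P \<and> cont p Q"
proof -
  have A1: "\<And>j. j < ov \<Longrightarrow> s + j < k \<and> Q ! j = P ! (s + j)" using al l unfolding Al_def by auto
  have A2: "\<And>j. ov \<le> j \<Longrightarrow> j < k \<Longrightarrow> Q ! j \<notin> set P" using al l unfolding Al_def by auto
  have inP: "Q ! j \<in> set P \<Longrightarrow> j < k \<Longrightarrow> j < ov" for j using A2 by (meson not_le)
  define e where "e v = (if v \<in> set P then idx P v else s + idx Q v)" for v
  have eP: "i < k \<Longrightarrow> e (P ! i) = i" for i unfolding e_def using idx_nth[OF dP] l by simp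
  have eQ: "j < k \<Longrightarrow> e (Q ! j) = s + j" for j
  proof -
    assume j: "j < k"
    show ?thesis
    proof (cases "Q ! j \<in> set P")
      case True
      then have "j < ov" using inP j by blast
      then have "Q ! j = P ! (s + j)" "s + j < k" using A1 by auto
      then show ?thesis using eP by simp
    next
      case False
      then show ?thesis unfolding e_def using idx_nth[OF dQ] l j by simp
    qed
  qed
  have cons: "\<forall>L\<in>set [P, Q]. \<forall>L'\<in>set [P, Q]. \<forall>i j. Suc i < length L \<longrightarrow> Suc j < length L' \<longrightarrow> L ! Suc i = L' ! Suc j \<longrightarrow> L ! i = L' ! j"
  proof -
    have pq: "P ! i = Q ! j" if h: "Suc i < k" "Suc j < k" "P ! Suc i = Q ! Suc j" for i j
    proof -
      have "Q ! Suc j \<in> set P" using h l by (metis nth_mem)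
      then have sj: "Suc j < ov" using inP h by blast
      have e1: "Q ! Suc j = P ! (s + Suc j)" "s + Suc j < k" using A1[OF sj] by auto
      then have "Suc i = s + Suc j" using dist_idx[OF dP, of "Suc i" "s + Suc j"] h l by simp
      then have "i = s + j" by simp
      moreover have "Q ! j = P ! (s + j)" using A1 sj by simp
      ultimately show ?thesis by simp
    qed
    have PP: "\<forall>i j. Suc i < length P \<longrightarrow> Suc j < length P \<longrightarrow> P ! Suc i = P ! Suc j \<longrightarrow> P ! i = P ! j"
    proof (intro allI impI)
      fix i j assume h: "Suc i < length P" "Suc j < length P" "P ! Suc i = P ! Suc j"
      then have "Suc i = Suc j" using dist_idx[OF dP] by blast
      then show "P ! i = P ! j" by simp
    qed
    have QQ: "\<forall>i j. Suc i < length Q \<longrightarrow> Suc j < length Q \<longrightarrow> Q ! Suc i = Q ! Suc j \<longrightarrow> Q ! i = Q ! j"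
    proof (intro allI impI)
      fix i j assume h: "Suc i < length Q" "Suc j < length Q" "Q ! Suc i = Q ! Suc j"
      then have "Suc i = Suc j" using dist_idx[OF dQ] by blast
      then show "Q ! i = Q ! j" by simp
    qed
    have PQ: "\<forall>i j. Suc i < length P \<longrightarrow> Suc j < length Q \<longrightarrow> P ! Suc i = Q ! Suc j \<longrightarrow> P ! i = Q ! j"
      using pq l by simp
    have QP: "\<forall>i j. Suc i < length Q \<longrightarrow> Suc j < length P \<longrightarrow> Q ! Suc i = P ! Suc j \<longrightarrow> Q ! i = P ! j"
    proof (intro allI impI)
      fix i j assume h: "Suc i < length Q" "Suc j < length P" "Q ! Suc i = P ! Suc j"
      have "P ! j = Q ! i" using pq[of j i] h l by simp
      then show "Q ! i = P ! j" by simp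
    qed
    have sPQ: "set [P, Q] = {P, Q}" by simp
    show ?thesis unfolding sPQ using PP QQ PQ QP by blast
  qed
  have rk: "\<forall>L\<in>set [P, Q]. \<forall>i. Suc i < length L \<longrightarrow> e (L ! i) < e (L ! Suc i)"
    using eP eQ l by auto
  have "pforest [P, Q] \<in> forests n" "allc (pforest [P, Q]) [P, Q]"
    using pforest_ok[OF _ cons rk] sub by auto
  then show ?thesis unfolding allc_def by auto
qed

definition Aal :: "nat list \<Rightarrow> nat \<Rightarrow> nat \<Rightarrow> nat \<Rightarrow> (nat list \<times> nat list) set" where
  "Aal pi u ov s = {x \<in> Cand pi u \<times> Cand pi u. set (fst x) \<union> set (snd x) = {1..u} \<and> Al ov s (fst x) (snd x)}"

lemma finite_Aal: "finite (Aal pi u ov s)"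
  unfolding Aal_def using finite_Cand by auto

lemma Aal_mem:
  assumes "x \<in> Aal pi u ov s" "is_pattern pi" "length pi = k"
  shows "ordd pi (fst x)" "ordd pi (snd x)" "set (fst x) \<subseteq> {1..u}" "set (snd x) \<subseteq> {1..u}"
    "distinct (fst x)" "distinct (snd x)" "length (fst x) = k" "length (snd x) = k"
    "set (fst x) \<union> set (snd x) = {1..u}" "Al ov s (fst x) (snd x)"
  using assms ordd_distinct ordd_len unfolding Aal_def Cand_def by auto

lemma Aal_sub:
  assumes pat: "is_pattern pi" and k: "length pi = k" and ov: "0 < ov" "ov < k"
  shows "Aal pi u ov s \<subseteq> Aset pi u {1..u}"
proof
  fix x assume x: "x \<in> Aal pi u ov s"
  note m = Aal_mem[OF x pat k]
  have A1: "s + 0 < k \<and> snd x ! 0 = fst x ! (s + 0)" using m(10) ov m(7) unfolding Al_def by auto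
  have A2: "snd x ! ov \<notin> set (fst x)" using m(10) ov m(8) unfolding Al_def by auto
  have ne: "fst x \<noteq> snd x"
  proof
    assume "fst x = snd x"
    then have "snd x ! ov \<in> set (fst x)" using ov m(8) by (metis nth_mem)
    then show False using A2 by simp
  qed
  have sh: "set (fst x) \<inter> set (snd x) \<noteq> {}"
  proof -
    have "snd x ! 0 \<in> set (snd x)" using ov m(8) by (intro nth0_mem) simp
    moreover have "snd x ! 0 \<in> set (fst x)" using A1 m(7) by (metis add_0_right nth_mem)
    ultimately show ?thesis by blast
  qed
  have "\<exists>p\<in>forests u. cont p (fst x) \<and> cont p (snd x)" by (rule al_forest[OF m(10) m(5,6,7,8,3,4)])
  then have "0 < FF u (fst x) (snd x)" using FF_pos_iff by blast
  then show "x \<in> Aset pi u {1..u}" using x ne sh m(9) unfolding Aal_def Aset_def Pairs_def by auto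
qed

lemma Aset_swap:
  assumes "x \<in> Aset pi u U"
  shows "(snd x, fst x) \<in> Aset pi u U"
proof -
  have "FF u (snd x) (fst x) = FF u (fst x) (snd x)" unfolding FF_def by (simp add: conj_commute)
  then show ?thesis using assms unfolding Aset_def Pairs_def by auto
qed

lemma Aset_union:
  assumes pat: "is_pattern pi" and k: "length pi = k" and ov: "0 < ov" "ov < k" and uo: "u + ov = 2 * k"
  shows "Aset pi u {1..u} = (\<Union>s\<in>{..k - ov}. Aal pi u ov s) \<union> (\<Union>s\<in>{1..k - ov}. (\<lambda>x. (snd x, fst x)) ` Aal pi u ov s)"
proof
  show "Aset pi u {1..u} \<subseteq> (\<Union>s\<in>{..k - ov}. Aal pi u ov s) \<union> (\<Union>s\<in>{1..k - ov}. (\<lambda>x. (snd x, fst x)) ` Aal pi u ov s)"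
  proof
    fix x assume x: "x \<in> Aset pi u {1..u}"
    have xp: "x \<in> Pairs pi u" and un: "set (fst x) \<union> set (snd x) = {1..u}" using x unfolding Aset_def by auto
    note m = Pairs_mem[OF xp pat]
    have lP: "length (fst x) = k" "length (snd x) = k" using m(1,2) ordd_len k by auto
    have cl: "(\<exists>s<k. Al ov s (fst x) (snd x)) \<or> (\<exists>s<k. 0 < s \<and> Al ov s (snd x) (fst x))"
      by (rule Aset_classify[OF x pat k uo])
    then show "x \<in> (\<Union>s\<in>{..k - ov}. Aal pi u ov s) \<union> (\<Union>s\<in>{1..k - ov}. (\<lambda>x. (snd x, fst x)) ` Aal pi u ov s)"
    proof (elim disjE exE conjE)
      fix s assume s: "s < k" "Al ov s (fst x) (snd x)"
      have o1: "ov - 1 < ov" using ov by simp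
      have A: "\<forall>j<ov. s + j < length (fst x) \<and> snd x ! j = fst x ! (s + j)" using s(2) unfolding Al_def by (rule conjunct1)
      have "s + (ov - 1) < length (fst x)" using A[rule_format, OF o1] by (rule conjunct1)
      then have "s + (ov - 1) < k" using lP by simp
      then have "s \<le> k - ov" using ov by simp
      moreover have "x \<in> Aal pi u ov s" unfolding Aal_def using xp s un unfolding Pairs_def by auto
      ultimately show ?thesis by blast
    next
      fix s assume s: "s < k" "0 < s" "Al ov s (snd x) (fst x)"
      have o1: "ov - 1 < ov" using ov by simp
      have A: "\<forall>j<ov. s + j < length (snd x) \<and> fst x ! j = snd x ! (s + j)" using s(3) unfolding Al_def by (rule conjunct1)
      have "s + (ov - 1) < length (snd x)" using A[rule_format, OF o1] by (rule conjunct1)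
      then have "s + (ov - 1) < k" using lP by simp
      then have "s \<in> {1..k - ov}" using ov s by simp
      moreover have "(snd x, fst x) \<in> Aal pi u ov s"
      proof -
        have c: "snd x \<in> Cand pi u" "fst x \<in> Cand pi u" using xp unfolding Pairs_def by auto
        have "set (snd x) \<union> set (fst x) = {1..u}" using un by (simp add: Un_commute)
        then show ?thesis unfolding Aal_def using c s(3) by simp
      qed
      moreover have "x = (\<lambda>x. (snd x, fst x)) (snd x, fst x)" by simp
      ultimately show ?thesis by blast
    qed
  qed
next
  show "(\<Union>s\<in>{..k - ov}. Aal pi u ov s) \<union> (\<Union>s\<in>{1..k - ov}. (\<lambda>x. (snd x, fst x)) ` Aal pi u ov s) \<subseteq> Aset pi u {1..u}"
  proof
    fix x assume "x \<in> (\<Union>s\<in>{..k - ov}. Aal pi u ov s) \<union> (\<Union>s\<in>{1..k - ov}. (\<lambda>x. (snd x, fst x)) ` Aal pi u ov s)"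
    then show "x \<in> Aset pi u {1..u}"
    proof
      assume "x \<in> (\<Union>s\<in>{..k - ov}. Aal pi u ov s)"
      then obtain s where "x \<in> Aal pi u ov s" by blast
      then show ?thesis using Aal_sub[OF pat k ov] by blast
    next
      assume "x \<in> (\<Union>s\<in>{1..k - ov}. (\<lambda>x. (snd x, fst x)) ` Aal pi u ov s)"
      then obtain s y where y: "y \<in> Aal pi u ov s" "x = (snd y, fst y)" by blast
      then have "y \<in> Aset pi u {1..u}" using Aal_sub[OF pat k ov] by blast
      then show ?thesis using Aset_swap y(2) by simp
    qed
  qed
qed

lemma Aal_disj:
  assumes pat: "is_pattern pi" and k: "length pi = k" and ov: "0 < ov"
    and x: "x \<in> Aal pi u ov s" "x \<in> Aal pi u ov s'"
  shows "s = s'"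
proof -
  note m = Aal_mem[OF x(1) pat k] and m' = Aal_mem[OF x(2) pat k]
  have a: "s + 0 < k" "snd x ! 0 = fst x ! (s + 0)" using m(10) ov m(7) unfolding Al_def by auto
  have b: "s' + 0 < k" "snd x ! 0 = fst x ! (s' + 0)" using m'(10) ov m(7) unfolding Al_def by auto
  show ?thesis using a b m(5,7) by (simp add: nth_eq_iff_index_eq)
qed

lemma Aal_disj2:
  assumes pat: "is_pattern pi" and k: "length pi = k" and ov: "0 < ov"
    and x: "x \<in> Aal pi u ov s" "(snd x, fst x) \<in> Aal pi u ov s'" and s': "0 < s'"
  shows False
proof -
  note m = Aal_mem[OF x(1) pat k] and m' = Aal_mem[OF x(2) pat k]
  have b: "s' < k" "fst x ! 0 = snd x ! s'" using m'(10) ov m(8) unfolding Al_def by auto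
  have "fst x ! 0 \<in> set (fst x)" using b m(7) by (intro nth0_mem) simp
  then have "snd x ! s' \<in> set (fst x)" using b by simp
  then have "s' < ov" using m(10) b m(8) unfolding Al_def by (meson not_le)
  then have "snd x ! s' = fst x ! (s + s')" using m(10) unfolding Al_def by auto
  moreover have "s + s' < k" using m(10) \<open>s' < ov\<close> m(7) unfolding Al_def by auto
  ultimately have "fst x ! 0 = fst x ! (s + s')" using b by simp
  then have "s + s' = 0" using m(5,7) \<open>s + s' < k\<close> by (simp add: nth_eq_iff_index_eq)
  then show False using s' by simp
qed

lemma card_Aset:
  assumes pat: "is_pattern pi" and k: "length pi = k" and ov: "0 < ov" "ov < k" and uo: "u + ov = 2 * k"
  shows "card (Aset pi u {1..u}) = (\<Sum>s\<in>{..k - ov}. card (Aal pi u ov s)) + (\<Sum>s\<in>{1..k - ov}. card (Aal pi u ov s))"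
proof -
  let ?sw = "\<lambda>x::nat list \<times> nat list. (snd x, fst x)"
  have injsw: "inj_on ?sw A" for A by (auto simp: inj_on_def)
  have d1: "card (\<Union>s\<in>{..k - ov}. Aal pi u ov s) = (\<Sum>s\<in>{..k - ov}. card (Aal pi u ov s))"
  proof (rule card_UN_disjoint)
    show "finite {..k - ov}" by simp
    show "\<forall>i\<in>{..k - ov}. finite (Aal pi u ov i)" using finite_Aal by blast
    show "\<forall>i\<in>{..k - ov}. \<forall>j\<in>{..k - ov}. i \<noteq> j \<longrightarrow> Aal pi u ov i \<inter> Aal pi u ov j = {}"
    proof (intro ballI impI)
      fix i j :: nat assume ij: "i \<noteq> j"
      show "Aal pi u ov i \<inter> Aal pi u ov j = {}"
      proof (rule ccontr)
        assume "Aal pi u ov i \<inter> Aal pi u ov j \<noteq> {}"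
        then obtain y where "y \<in> Aal pi u ov i" "y \<in> Aal pi u ov j" by blast
        then have "i = j" using Aal_disj[OF pat k ov(1)] by blast
        then show False using ij by simp
      qed
    qed
  qed
  have d2: "card (\<Union>s\<in>{1..k - ov}. ?sw ` Aal pi u ov s) = (\<Sum>s\<in>{1..k - ov}. card (?sw ` Aal pi u ov s))"
  proof (rule card_UN_disjoint)
    show "finite {1..k - ov}" by simp
    show "\<forall>i\<in>{1..k - ov}. finite (?sw ` Aal pi u ov i)" using finite_Aal by auto
    show "\<forall>i\<in>{1..k - ov}. \<forall>j\<in>{1..k - ov}. i \<noteq> j \<longrightarrow> ?sw ` Aal pi u ov i \<inter> ?sw ` Aal pi u ov j = {}"
    proof (intro ballI impI)
      fix i j :: nat assume ij: "i \<noteq> j"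
      show "?sw ` Aal pi u ov i \<inter> ?sw ` Aal pi u ov j = {}"
      proof (rule ccontr)
        assume "?sw ` Aal pi u ov i \<inter> ?sw ` Aal pi u ov j \<noteq> {}"
        then obtain y z where yz: "y \<in> Aal pi u ov i" "z \<in> Aal pi u ov j" "?sw y = ?sw z" by blast
        then have "y = z" by (simp add: prod_eq_iff)
        then have "i = j" using Aal_disj[OF pat k ov(1) yz(1)] yz(2) by simp
        then show False using ij by simp
      qed
    qed
  qed
  have d3: "card (?sw ` Aal pi u ov s) = card (Aal pi u ov s)" for s using card_image[OF injsw] by blast
  have dj: "(\<Union>s\<in>{..k - ov}. Aal pi u ov s) \<inter> (\<Union>s\<in>{1..k - ov}. ?sw ` Aal pi u ov s) = {}"
  proof (rule ccontr)
    assume "\<not> ?thesis"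
    then obtain x s s' where x: "x \<in> Aal pi u ov s" "s' \<in> {1..k - ov}" "x \<in> ?sw ` Aal pi u ov s'" by blast
    then obtain y where y: "y \<in> Aal pi u ov s'" "x = ?sw y" by blast
    then have sw: "(snd x, fst x) \<in> Aal pi u ov s'" by simp
    have "0 < s'" using x(2) by simp
    then show False using Aal_disj2[OF pat k ov(1) x(1) sw] by simp
  qed
  have "card (Aset pi u {1..u}) = card (\<Union>s\<in>{..k - ov}. Aal pi u ov s) + card (\<Union>s\<in>{1..k - ov}. ?sw ` Aal pi u ov s)"
  proof -
    have f1: "finite (\<Union>s\<in>{..k - ov}. Aal pi u ov s)" by (rule finite_UN_I) (simp_all add: finite_Aal)
    have f2: "finite (\<Union>s\<in>{1..k - ov}. ?sw ` Aal pi u ov s)" by (rule finite_UN_I) (simp_all add: finite_Aal)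
    show ?thesis unfolding Aset_union[OF pat k ov uo] by (rule card_Un_disjoint[OF f1 f2 dj])
  qed
  then show ?thesis using d1 d2 d3 by simp
qed


lemma Aal_inter:
  assumes x: "x \<in> Aal pi u ov s" and pat: "is_pattern pi" and k: "length pi = k"
  shows "set (fst x) \<inter> set (snd x) = (\<lambda>j. fst x ! (s + j)) ` {..<ov}"
proof -
  note m = Aal_mem[OF x pat k]
  have A1: "\<And>j. j < ov \<Longrightarrow> s + j < k \<and> snd x ! j = fst x ! (s + j)" using m(10) m(7) unfolding Al_def by auto
  have A2: "\<And>j. ov \<le> j \<Longrightarrow> j < k \<Longrightarrow> snd x ! j \<notin> set (fst x)" using m(10) m(8) unfolding Al_def by auto
  show ?thesis
  proof
    show "set (fst x) \<inter> set (snd x) \<subseteq> (\<lambda>j. fst x ! (s + j)) ` {..<ov}"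
    proof
      fix z assume z: "z \<in> set (fst x) \<inter> set (snd x)"
      then obtain j where j: "j < k" "z = snd x ! j" using m(8) by (metis IntD2 in_set_conv_nth)
      have "j < ov" using A2[of j] j z by (meson IntD1 not_le)
      then show "z \<in> (\<lambda>j. fst x ! (s + j)) ` {..<ov}" using A1 j by auto
    qed
  next
    show "(\<lambda>j. fst x ! (s + j)) ` {..<ov} \<subseteq> set (fst x) \<inter> set (snd x)"
    proof
      fix z assume "z \<in> (\<lambda>j. fst x ! (s + j)) ` {..<ov}"
      then obtain j where j: "j < ov" "z = fst x ! (s + j)" by blast
      have a: "s + j < k" "snd x ! j = fst x ! (s + j)" using A1[OF j(1)] by auto
      have "j < k" using a by simp
      then have "snd x ! j \<in> set (snd x)" using m(8) by simp
      moreover have "fst x ! (s + j) \<in> set (fst x)" using a m(7) by simp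
      ultimately show "z \<in> set (fst x) \<inter> set (snd x)" using a j by simp
    qed
  qed
qed

lemma Aal_R:
  assumes x: "x \<in> Aal pi u ov s" and pat: "is_pattern pi" and k: "length pi = k"
  shows "set (snd x) - set (fst x) = (\<lambda>j. snd x ! j) ` {ov..<k}"
proof -
  note m = Aal_mem[OF x pat k]
  have A1: "\<And>j. j < ov \<Longrightarrow> s + j < k \<and> snd x ! j = fst x ! (s + j)" using m(10) m(7) unfolding Al_def by auto
  have A2: "\<And>j. ov \<le> j \<Longrightarrow> j < k \<Longrightarrow> snd x ! j \<notin> set (fst x)" using m(10) m(8) unfolding Al_def by auto
  show ?thesis
  proof
    show "set (snd x) - set (fst x) \<subseteq> (\<lambda>j. snd x ! j) ` {ov..<k}"
    proof
      fix z assume z: "z \<in> set (snd x) - set (fst x)"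
      then obtain j where j: "j < k" "z = snd x ! j" using m(8) by (metis DiffD1 in_set_conv_nth)
      have "\<not> j < ov"
      proof
        assume "j < ov"
        then have "z = fst x ! (s + j)" "s + j < k" using A1 j by auto
        then have "z \<in> set (fst x)" using m(7) by simp
        then show False using z by simp
      qed
      then show "z \<in> (\<lambda>j. snd x ! j) ` {ov..<k}" using j by auto
    qed
  next
    show "(\<lambda>j. snd x ! j) ` {ov..<k} \<subseteq> set (snd x) - set (fst x)"
    proof
      fix z assume "z \<in> (\<lambda>j. snd x ! j) ` {ov..<k}"
      then obtain j where j: "ov \<le> j" "j < k" "z = snd x ! j" by auto
      then show "z \<in> set (snd x) - set (fst x)" using A2[OF j(1,2)] m(8) by simp
    qed
  qed
qed

lemma Aal_fst_set:
  assumes x: "x \<in> Aal pi u ov s" and pat: "is_pattern pi" and k: "length pi = k"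
  shows "set (fst x) = {1..u} - (set (snd x) - set (fst x))"
  using Aal_mem(9)[OF x pat k] by blast

lemma Aal_snd_set:
  assumes x: "x \<in> Aal pi u ov s" and pat: "is_pattern pi" and k: "length pi = k"
  shows "set (snd x) = (\<lambda>j. fst x ! (s + j)) ` {..<ov} \<union> (set (snd x) - set (fst x))"
  using Aal_inter[OF x pat k] by blast

lemma Aal_inj:
  assumes x: "x \<in> Aal pi u ov s" and y: "y \<in> Aal pi u ov s" and pat: "is_pattern pi" and k: "length pi = k"
    and e: "set (snd x) - set (fst x) = set (snd y) - set (fst y)"
  shows "x = y"
proof -
  note mx = Aal_mem[OF x pat k] and my = Aal_mem[OF y pat k]
  have "set (fst x) = set (fst y)" using Aal_fst_set[OF x pat k] Aal_fst_set[OF y pat k] e by simp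
  then have f: "fst x = fst y" using ordd_unique[OF mx(1) my(1) pat] by simp
  have "set (snd x) = set (snd y)" using Aal_snd_set[OF x pat k] Aal_snd_set[OF y pat k] e f by simp
  then have "snd x = snd y" using ordd_unique[OF mx(2) my(2) pat] by simp
  then show ?thesis using f by (simp add: prod_eq_iff)
qed

lemma Aal_window:
  assumes x: "x \<in> Aal pi u ov s" and pat: "is_pattern pi" and k: "length pi = k"
    and j: "j < ov" "j' < ov"
  shows "pi ! j < pi ! j' \<longleftrightarrow> pi ! (s + j) < pi ! (s + j')"
proof -
  note m = Aal_mem[OF x pat k]
  have A1: "\<And>j. j < ov \<Longrightarrow> s + j < k \<and> snd x ! j = fst x ! (s + j)" using m(10) m(7) unfolding Al_def by auto
  have a: "s + j < k" "snd x ! j = fst x ! (s + j)" "s + j' < k" "snd x ! j' = fst x ! (s + j')"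
    using A1[OF j(1)] A1[OF j(2)] by auto
  have jk: "j < k" "j' < k" using a by auto
  have "pi ! j < pi ! j' \<longleftrightarrow> snd x ! j < snd x ! j'" using ordd_lt[OF m(2)] jk k by simp
  also have "\<dots> \<longleftrightarrow> fst x ! (s + j) < fst x ! (s + j')" using a by simp
  also have "\<dots> \<longleftrightarrow> pi ! (s + j) < pi ! (s + j')" using ordd_lt[OF m(1)] a k by simp
  finally show ?thesis .
qed

lemma card_below:
  assumes "y \<in> {1..(u::nat)}"
  shows "card {z \<in> {1..u}. z < y} = y - 1"
proof -
  have "{z \<in> {1..u}. z < y} = {1..<y}" using assms by auto
  then show ?thesis by simp
qed

lemma card_atmost_in:
  assumes "y \<in> {1..(u::nat)}"
  shows "card {z \<in> {1..u}. z \<le> y} = y"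
proof -
  have "{z \<in> {1..u}. z \<le> y} = {1..y}" using assms by auto
  then show ?thesis by simp
qed

lemma card_img_filter:
  assumes "distinct Q" "A \<subseteq> {..<length Q}"
  shows "card {z \<in> (\<lambda>t. Q ! t) ` A. Pr z} = card {t \<in> A. Pr (Q ! t)}"
proof -
  have "{z \<in> (\<lambda>t. Q ! t) ` A. Pr z} = (\<lambda>t. Q ! t) ` {t \<in> A. Pr (Q ! t)}" by auto
  moreover have "inj_on (\<lambda>t. Q ! t) {t \<in> A. Pr (Q ! t)}"
  proof (rule inj_onI)
    fix a b assume "a \<in> {t \<in> A. Pr (Q ! t)}" "b \<in> {t \<in> A. Pr (Q ! t)}" "Q ! a = Q ! b"
    then show "a = b" using dist_idx[OF assms(1)] assms(2) by blast
  qed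
  ultimately show ?thesis using card_image by metis
qed


lemma pref_big:
  assumes pat: "is_pattern pi" and k: "length pi = k" and pref: "\<forall>j<ov. pi ! j = Suc j"
    and t: "ov \<le> t" "t < k"
  shows "ov < pi ! t"
proof (rule ccontr)
  assume "\<not> ov < pi ! t"
  then have le: "pi ! t \<le> ov" by simp
  have r: "pi ! t \<in> {1..k}" using pat_range[OF pat] t k by simp
  define j where "j = pi ! t - 1"
  have j: "j < ov" "Suc j = pi ! t" using le r unfolding j_def by auto
  then have "pi ! j = pi ! t" using pref by simp
  moreover have "j < k" using j t by simp
  ultimately have "j = t" using dist_idx[OF pat_distinct[OF pat]] t k by simp
  then show False using j t by simp
qed

lemma run_mono:
  fixes pi :: "nat list"
  assumes run: "\<forall>t. s \<le> t \<longrightarrow> Suc t < s + ov \<longrightarrow> pi ! t < pi ! Suc t"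
  shows "j < j' \<Longrightarrow> j' < ov \<Longrightarrow> pi ! (s + j) < pi ! (s + j')"
proof (induction j')
  case 0 then show ?case by simp
next
  case (Suc j')
  have st: "pi ! (s + j') < pi ! Suc (s + j')" using run Suc.prems by simp
  show ?case
  proof (cases "j = j'")
    case True then show ?thesis using st by simp
  next
    case False
    then have "pi ! (s + j) < pi ! (s + j')" using Suc by simp
    then have "pi ! (s + j) < pi ! Suc (s + j')" using st by linarith
    then show ?thesis by simp
  qed
qed

lemma card_Aal_exact:
  assumes pat: "is_pattern pi" and k: "length pi = k" and ov: "0 < ov" "ov < k"
    and uo: "u + ov = 2 * k" and pref: "\<forall>j<ov. pi ! j = Suc j"
    and run: "\<forall>t. s \<le> t \<longrightarrow> Suc t < s + ov \<longrightarrow> pi ! t < pi ! Suc t"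
    and sk: "s + ov \<le> k"
  shows "card (Aal pi u ov s) = (u - pi ! (s + ov - 1)) choose (k - ov)"
proof -
  define w where "w = pi ! (s + ov - 1)"
  have skk: "s + ov - 1 < k" using sk ov by simp
  have wr: "w \<in> {1..k}" unfolding w_def using pat_range[OF pat] skk k by simp
  have ku: "k \<le> u" using uo ov by simp
  define RR where "RR = {R. R \<subseteq> {Suc w..u} \<and> card R = k - ov}"
  define f where "f x = set (snd x) - set (fst x)" for x :: "nat list \<times> nat list"
  have inj: "inj_on f (Aal pi u ov s)"
    by (rule inj_onI) (use Aal_inj[OF _ _ pat k] in \<open>auto simp: f_def\<close>)
  have sub1: "f ` Aal pi u ov s \<subseteq> RR"
  proof
    fix R assume "R \<in> f ` Aal pi u ov s"
    then obtain x where x: "x \<in> Aal pi u ov s" "R = f x" by blast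
    note m = Aal_mem[OF x(1) pat k]
    let ?P = "fst x" and ?Q = "snd x"
    have RR': "R = (\<lambda>j. ?Q ! j) ` {ov..<k}" using Aal_R[OF x(1) pat k] x(2) unfolding f_def by simp
    have cR: "card R = k - ov"
    proof -
      have "inj_on (\<lambda>j. ?Q ! j) {ov..<k}"
      proof (rule inj_onI)
        fix a b assume "a \<in> {ov..<k}" "b \<in> {ov..<k}" "?Q ! a = ?Q ! b"
        then show "a = b" using dist_idx[OF m(6)] m(8) by auto
      qed
      then show ?thesis using RR' card_image by fastforce
    qed
    have A1: "\<And>j. j < ov \<Longrightarrow> s + j < k \<and> ?Q ! j = ?P ! (s + j)" using m(10) m(7) unfolding Al_def by auto
    define y where "y = ?P ! (s + ov - 1)"
    have qy: "?Q ! (ov - 1) = y" using A1[of "ov - 1"] ov unfolding y_def by simp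
    have big: "z \<in> R \<Longrightarrow> y < z" for z
    proof -
      assume "z \<in> R"
      then obtain j where j: "ov \<le> j" "j < k" "z = ?Q ! j" using RR' by auto
      have "pi ! (ov - 1) = ov" using pref ov by simp
      moreover have "ov < pi ! j" using pref_big[OF pat k pref j(1,2)] .
      ultimately have "pi ! (ov - 1) < pi ! j" by simp
      then have "?Q ! (ov - 1) < ?Q ! j" using ordd_lt[OF m(2)] j ov k by simp
      then show "y < z" using qy j by simp
    qed
    have yu: "y \<in> {1..u}" unfolding y_def using m(3) m(7) skk nth_mem by blast
    have e1: "{z \<in> {1..u}. z < y} = {z \<in> set ?P. z < y}"
    proof
      show "{z \<in> {1..u}. z < y} \<subseteq> {z \<in> set ?P. z < y}"
      proof
        fix z assume z: "z \<in> {z \<in> {1..u}. z < y}"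
        have "z \<notin> R" using big z by fastforce
        then show "z \<in> {z \<in> set ?P. z < y}" using z m(9) x(2) unfolding f_def by auto
      qed
      show "{z \<in> set ?P. z < y} \<subseteq> {z \<in> {1..u}. z < y}" using m(3) by auto
    qed
    have "card {z \<in> set ?P. z < y} = w - 1" unfolding y_def w_def using ordd_rank[OF m(1) pat] skk k by simp
    then have "y - 1 = w - 1" using card_below[OF yu] e1 by simp
    moreover have "1 \<le> y" "1 \<le> w" using yu wr by auto
    ultimately have yw: "y = w" by arith
    have "R \<subseteq> {Suc w..u}"
    proof
      fix z assume z: "z \<in> R"
      have "z \<in> set ?Q" using z x(2) unfolding f_def by simp
      then have "z \<in> {1..u}" using m(4) by blast
      then show "z \<in> {Suc w..u}" using big[OF z] yw by simp
    qed
    then show "R \<in> RR" unfolding RR_def using cR by simp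
  qed
  have sub2: "RR \<subseteq> f ` Aal pi u ov s"
  proof
    fix R assume "R \<in> RR"
    then have R: "R \<subseteq> {Suc w..u}" "card R = k - ov" unfolding RR_def by auto
    have Ru: "R \<subseteq> {1..u}" using R(1) by auto
    have fR: "finite R" using Ru finite_subset by blast
    define X where "X = {1..u} - R"
    have cX: "card X = length pi"
    proof -
      have "card X = u - (k - ov)" unfolding X_def using card_Diff_subset[OF fR Ru] R(2) by simp
      then show ?thesis using uo ov k by simp
    qed
    have fX: "finite X" unfolding X_def by simp
    define P where "P = arr pi X"
    note aP = arr_props[OF pat fX cX]
    have sP: "set P = X" "ordd pi P" "length P = k" using aP k unfolding P_def by auto
    have dP: "distinct P" using ordd_distinct[OF sP(2) pat] .
    have wX: "w \<in> X" unfolding X_def using wr ku R(1) by auto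
    have rkw: "card {z \<in> X. z < w} = w - 1"
    proof -
      have "{z \<in> X. z < w} = {1..<w}" unfolding X_def using R(1) wr ku by auto
      then show ?thesis by simp
    qed
    have Pw: "P ! (s + ov - 1) = w"
    proof (rule rank_inj[OF fX])
      show "P ! (s + ov - 1) \<in> X" using sP skk by (metis nth_mem)
      show "w \<in> X" by (rule wX)
      show "card {z \<in> X. z < P ! (s + ov - 1)} = card {z \<in> X. z < w}"
        using ordd_rank[OF sP(2) pat] skk k sP(1) rkw unfolding w_def by simp
    qed
    have Plt: "j < j' \<Longrightarrow> j' < ov \<Longrightarrow> P ! (s + j) < P ! (s + j')" for j j'
    proof -
      assume jj: "j < j'" "j' < ov"
      have "pi ! (s + j) < pi ! (s + j')" using run_mono[OF run jj] .
      moreover have "s + j < k" "s + j' < k" using jj sk by auto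
      ultimately show ?thesis using ordd_lt[OF sP(2)] k by simp
    qed
    have Ple: "j < ov \<Longrightarrow> P ! (s + j) \<le> w" for j
    proof -
      assume j: "j < ov"
      show ?thesis
      proof (cases "j = ov - 1")
        case True
        have "s + j = s + ov - 1" using True ov by simp
        then show ?thesis using Pw by simp
      next
        case False
        then have "j < ov - 1" using j by simp
        have o1: "ov - 1 < ov" using ov by simp
        have "P ! (s + j) < P ! (s + (ov - 1))" using Plt[OF \<open>j < ov - 1\<close> o1] .
        moreover have "s + (ov - 1) = s + ov - 1" using ov by simp
        ultimately show ?thesis using Pw by simp
      qed
    qed
    define C where "C = (\<lambda>j. P ! (s + j)) ` {..<ov}"
    have CX: "C \<subseteq> X"
    proof
      fix z assume "z \<in> C"
      then obtain j where "j < ov" "z = P ! (s + j)" unfolding C_def by blast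
      then have "s + j < length P" using sP(3) sk by simp
      then have "P ! (s + j) \<in> set P" by (rule nth_mem)
      then show "z \<in> X" using sP(1) \<open>z = P ! (s + j)\<close> by simp
    qed
    have injC: "inj_on (\<lambda>j. P ! (s + j)) {..<ov}"
    proof (rule inj_onI)
      fix a b assume "a \<in> {..<ov}" "b \<in> {..<ov}" "P ! (s + a) = P ! (s + b)"
      then have ab: "a < ov" "b < ov" "P ! (s + a) = P ! (s + b)" by auto
      have "s + a < length P" "s + b < length P" using ab sP(3) sk by auto
      then have "s + a = s + b" using dist_idx[OF dP] ab(3) by blast
      then show "a = b" by simp
    qed
    have cC: "card C = ov" unfolding C_def using card_image[OF injC] by simp
    define Y where "Y = C \<union> R"
    have CR: "C \<inter> R = {}" using CX unfolding X_def by blast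
    have fC: "finite C" unfolding C_def by simp
    have cY: "card Y = length pi"
    proof -
      have "card Y = card C + card R" unfolding Y_def using card_Un_disjoint[OF fC fR CR] .
      then show ?thesis using cC R(2) ov k by simp
    qed
    have fY: "finite Y" unfolding Y_def using fC fR by simp
    have Yu: "Y \<subseteq> {1..u}" unfolding Y_def using CX Ru unfolding X_def by blast
    define Q where "Q = arr pi Y"
    note aQ = arr_props[OF pat fY cY]
    have sQ: "set Q = Y" "ordd pi Q" "length Q = k" using aQ k unfolding Q_def by auto
    have dQ: "distinct Q" using ordd_distinct[OF sQ(2) pat] .
    have Qj: "j < ov \<Longrightarrow> Q ! j = P ! (s + j)" for j
    proof -
      assume j: "j < ov"
      have jk: "j < k" using j ov by simp
      have e: "{z \<in> Y. z < P ! (s + j)} = (\<lambda>j'. P ! (s + j')) ` {..<j}"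
      proof
        show "{z \<in> Y. z < P ! (s + j)} \<subseteq> (\<lambda>j'. P ! (s + j')) ` {..<j}"
        proof
          fix z assume z: "z \<in> {z \<in> Y. z < P ! (s + j)}"
          show "z \<in> (\<lambda>j'. P ! (s + j')) ` {..<j}"
          proof (cases "z \<in> C")
            case True
            then obtain j' where j': "j' < ov" "z = P ! (s + j')" unfolding C_def by blast
            have "j' < j"
            proof (rule ccontr)
              assume "\<not> j' < j"
              then have "j < j' \<or> j = j'" by arith
              then show False
              proof
                assume "j < j'" then have "P ! (s + j) < P ! (s + j')" using Plt j'(1) by simp
                then show False using z j' by simp
              next
                assume "j = j'" then show False using z j' by simp
              qed
            qed
            then show ?thesis using j' by blast
          next
            case False
            then have "z \<in> R" using z unfolding Y_def by blast
            then have "w < z" using R(1) by auto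
            moreover have "P ! (s + j) \<le> w" using Ple j by simp
            ultimately show ?thesis using z by simp
          qed
        qed
        show "(\<lambda>j'. P ! (s + j')) ` {..<j} \<subseteq> {z \<in> Y. z < P ! (s + j)}"
        proof
          fix z assume "z \<in> (\<lambda>j'. P ! (s + j')) ` {..<j}"
          then obtain j' where j': "j' < j" "z = P ! (s + j')" by blast
          have "z \<in> C" unfolding C_def using j' j by simp
          moreover have "z < P ! (s + j)" using Plt[OF j'(1) j] j' by simp
          ultimately show "z \<in> {z \<in> Y. z < P ! (s + j)}" unfolding Y_def by simp
        qed
      qed
      have "{..<j} \<subseteq> {..<ov}" using j by auto
      then have inj': "inj_on (\<lambda>j'. P ! (s + j')) {..<j}" using injC inj_on_subset by blast
      have c1: "card {z \<in> Y. z < P ! (s + j)} = j" using e card_image[OF inj'] by simp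
      have c2: "card {z \<in> Y. z < Q ! j} = j" using ordd_rank[OF sQ(2) pat] jk k sQ(1) pref j by simp
      show ?thesis
      proof (rule rank_inj[OF fY])
        show "Q ! j \<in> Y" using sQ jk by (metis nth_mem)
        show "P ! (s + j) \<in> Y" unfolding Y_def C_def using j by blast
        show "card {z \<in> Y. z < Q ! j} = card {z \<in> Y. z < P ! (s + j)}" using c1 c2 by simp
      qed
    qed
    have Qnot: "ov \<le> j \<Longrightarrow> j < k \<Longrightarrow> Q ! j \<notin> X" for j
    proof -
      assume j: "ov \<le> j" "j < k"
      have "Q ! j \<in> Y" using sQ j by (metis nth_mem)
      moreover have "Q ! j \<notin> C"
      proof
        assume "Q ! j \<in> C"
        then obtain j' where j': "j' < ov" "Q ! j = P ! (s + j')" unfolding C_def by blast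
        then have "Q ! j = Q ! j'" using Qj by simp
        then have "j = j'" using dist_idx[OF dQ] j j' sQ(3) ov by simp
        then show False using j j' by simp
      qed
      ultimately have "Q ! j \<in> R" unfolding Y_def by blast
      then show ?thesis unfolding X_def by blast
    qed
    have al: "Al ov s P Q" unfolding Al_def
    proof (intro conjI allI impI)
      fix j assume j: "j < ov"
      show "s + j < length P" using j sk sP(3) by simp
      show "Q ! j = P ! (s + j)" using Qj j by simp
    next
      fix j assume "ov \<le> j \<and> j < length Q"
      then show "Q ! j \<notin> set P" using Qnot sP(1) sQ(3) by simp
    qed
    have un: "set P \<union> set Q = {1..u}" using sP(1) sQ(1) CX Ru unfolding X_def Y_def by blast
    have mem: "(P, Q) \<in> Aal pi u ov s"
      unfolding Aal_def Cand_def using sP sQ al un Yu unfolding X_def by auto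
    have "f (P, Q) = R" unfolding f_def using sP(1) sQ(1) CX unfolding X_def Y_def by auto
    then show "R \<in> f ` Aal pi u ov s" using mem by (metis image_eqI)
  qed
  have "card (Aal pi u ov s) = card RR" using card_image[OF inj] sub1 sub2 by simp
  also have "\<dots> = card {Suc w..u} choose (k - ov)" unfolding RR_def by (rule n_subsets) simp
  also have "card {Suc w..u} = u - w" by simp
  finally show ?thesis unfolding w_def .
qed


lemma Aal0_val:
  assumes x: "x \<in> Aal pi u ov 0" and pat: "is_pattern pi" and k: "length pi = k" and j: "j < ov"
  shows "fst x ! j = card {i. i < k \<and> pi ! i \<le> pi ! j} + card {t. ov \<le> t \<and> t < k \<and> pi ! t \<le> pi ! j}"
proof -
  note m = Aal_mem[OF x pat k]
  let ?P = "fst x" and ?Q = "snd x"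
  have A1: "\<And>j. j < ov \<Longrightarrow> 0 + j < k \<and> ?Q ! j = ?P ! (0 + j)" using m(10) m(7) unfolding Al_def by auto
  have jk: "j < k" and qp: "?Q ! j = ?P ! j" using A1[OF j] by auto
  define R where "R = set ?Q - set ?P"
  have RR: "R = (\<lambda>t. ?Q ! t) ` {ov..<k}" unfolding R_def using Aal_R[OF x pat k] .
  have yu: "?P ! j \<in> {1..u}" using m(3) m(7) jk nth_mem by blast
  have e: "{z \<in> {1..u}. z \<le> ?P ! j} = {z \<in> set ?P. z \<le> ?P ! j} \<union> {z \<in> R. z \<le> ?P ! j}"
    using m(9) m(3) unfolding R_def by blast
  have dj: "{z \<in> set ?P. z \<le> ?P ! j} \<inter> {z \<in> R. z \<le> ?P ! j} = {}" unfolding R_def by blast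
  have fin: "finite {z \<in> set ?P. z \<le> ?P ! j}" "finite {z \<in> R. z \<le> ?P ! j}" unfolding R_def by auto
  have c1: "card {z \<in> set ?P. z \<le> ?P ! j} = card {i. i < k \<and> pi ! i \<le> pi ! j}"
  proof -
    have "card {z \<in> set ?P. z \<le> ?P ! j} = card {i. i < length ?P \<and> ?P ! i \<le> ?P ! j}"
      by (rule card_idx_filter[OF m(5), symmetric])
    also have "{i. i < length ?P \<and> ?P ! i \<le> ?P ! j} = {i. i < k \<and> pi ! i \<le> pi ! j}"
    proof (rule Collect_cong)
      fix i
      show "(i < length ?P \<and> ?P ! i \<le> ?P ! j) = (i < k \<and> pi ! i \<le> pi ! j)"
      proof (cases "i < k")
        case True
        have "?P ! j < ?P ! i \<longleftrightarrow> pi ! j < pi ! i" using ordd_lt[OF m(1)] True jk k by simp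
        then show ?thesis using True m(7) by auto
      next
        case False then show ?thesis using m(7) by simp
      qed
    qed
    finally show ?thesis .
  qed
  have c2: "card {z \<in> R. z \<le> ?P ! j} = card {t. ov \<le> t \<and> t < k \<and> pi ! t \<le> pi ! j}"
  proof -
    have "card {z \<in> R. z \<le> ?P ! j} = card {t \<in> {ov..<k}. ?Q ! t \<le> ?P ! j}"
      unfolding RR by (rule card_img_filter[OF m(6)]) (use m(8) in auto)
    also have "{t \<in> {ov..<k}. ?Q ! t \<le> ?P ! j} = {t. ov \<le> t \<and> t < k \<and> pi ! t \<le> pi ! j}"
    proof (rule set_eqI)
      fix t
      show "(t \<in> {t \<in> {ov..<k}. ?Q ! t \<le> ?P ! j}) = (t \<in> {t. ov \<le> t \<and> t < k \<and> pi ! t \<le> pi ! j})"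
      proof (cases "ov \<le> t \<and> t < k")
        case True
        have "?Q ! j < ?Q ! t \<longleftrightarrow> pi ! j < pi ! t" using ordd_lt[OF m(2)] True jk k by simp
        then show ?thesis using True qp by auto
      next
        case False then show ?thesis by auto
      qed
    qed
    finally show ?thesis .
  qed
  have "?P ! j = card {z \<in> {1..u}. z \<le> ?P ! j}" using card_atmost_in[OF yu] by simp
  also have "\<dots> = card {z \<in> set ?P. z \<le> ?P ! j} + card {z \<in> R. z \<le> ?P ! j}"
    unfolding e by (rule card_Un_disjoint[OF fin dj])
  finally show ?thesis using c1 c2 by simp
qed

lemma card_Aal0_le:
  assumes pat: "is_pattern pi" and k: "length pi = k" and ov: "0 < ov" "ov < k" and uo: "u + ov = 2 * k"
  shows "card (Aal pi u ov 0) \<le> (2 * k - 2 * ov) choose (k - ov)"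
proof (cases "Aal pi u ov 0 = {}")
  case True then show ?thesis by simp
next
  case False
  then obtain x0 where x0: "x0 \<in> Aal pi u ov 0" by blast
  define cv where "cv j = card {i. i < k \<and> pi ! i \<le> pi ! j} + card {t. ov \<le> t \<and> t < k \<and> pi ! t \<le> pi ! j}" for j
  define C0 where "C0 = cv ` {..<ov}"
  have inter: "set (fst x) \<inter> set (snd x) = C0" if x: "x \<in> Aal pi u ov 0" for x
  proof -
    have "set (fst x) \<inter> set (snd x) = (\<lambda>j. fst x ! (0 + j)) ` {..<ov}" by (rule Aal_inter[OF x pat k])
    also have "\<dots> = cv ` {..<ov}" using Aal0_val[OF x pat k] unfolding cv_def by auto
    finally show ?thesis unfolding C0_def .
  qed
  note m0 = Aal_mem[OF x0 pat k]
  have cC: "card C0 = ov"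
  proof -
    have "C0 = (\<lambda>j. fst x0 ! (0 + j)) ` {..<ov}" using inter[OF x0] Aal_inter[OF x0 pat k] by simp
    moreover have "inj_on (\<lambda>j. fst x0 ! (0 + j)) {..<ov}"
    proof (rule inj_onI)
      fix a b assume "a \<in> {..<ov}" "b \<in> {..<ov}" "fst x0 ! (0 + a) = fst x0 ! (0 + b)"
      then show "a = b" using dist_idx[OF m0(5)] m0(7) ov by auto
    qed
    ultimately show ?thesis using card_image by fastforce
  qed
  have C0u: "C0 \<subseteq> {1..u}" using inter[OF x0] m0(3) by blast
  define f where "f x = set (snd x) - set (fst x)" for x :: "nat list \<times> nat list"
  define RR where "RR = {R. R \<subseteq> {1..u} - C0 \<and> card R = k - ov}"
  have inj: "inj_on f (Aal pi u ov 0)"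
    by (rule inj_onI) (use Aal_inj[OF _ _ pat k] in \<open>auto simp: f_def\<close>)
  have sub: "f ` Aal pi u ov 0 \<subseteq> RR"
  proof
    fix R assume "R \<in> f ` Aal pi u ov 0"
    then obtain x where x: "x \<in> Aal pi u ov 0" "R = f x" by blast
    note m = Aal_mem[OF x(1) pat k]
    have RR': "R = (\<lambda>j. snd x ! j) ` {ov..<k}" using Aal_R[OF x(1) pat k] x(2) unfolding f_def by simp
    have cR: "card R = k - ov"
    proof -
      have "inj_on (\<lambda>j. snd x ! j) {ov..<k}"
      proof (rule inj_onI)
        fix a b assume "a \<in> {ov..<k}" "b \<in> {ov..<k}" "snd x ! a = snd x ! b"
        then show "a = b" using dist_idx[OF m(6)] m(8) by auto
      qed
      then show ?thesis using RR' card_image by fastforce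
    qed
    have "R \<subseteq> {1..u} - C0" using x(2) m(4) inter[OF x(1)] unfolding f_def by blast
    then show "R \<in> RR" unfolding RR_def using cR by simp
  qed
  have fRR: "finite RR" unfolding RR_def by simp
  have "card (Aal pi u ov 0) \<le> card RR" using card_inj_on_le[OF inj sub fRR] .
  also have "\<dots> = card ({1..u} - C0) choose (k - ov)" unfolding RR_def by (rule n_subsets) simp
  also have "card ({1..u} - C0) = 2 * k - 2 * ov"
  proof -
    have "finite C0" unfolding C0_def by simp
    then have "card ({1..u} - C0) = u - ov" using card_Diff_subset[OF _ C0u] cC by simp
    then show ?thesis using uo by simp
  qed
  finally show ?thesis .
qed


definition SS :: "nat list \<Rightarrow> nat set" where
  "SS pi = {m. m \<le> length pi \<and> (\<forall>i\<in>{1..m}. pe pi i = i)}"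

lemma SS_fin: "finite (SS pi)" unfolding SS_def by simp

lemma SS_0: "0 \<in> SS pi" unfolding SS_def by simp

lemma streak_mem: "streak pi \<in> SS pi"
  unfolding streak_def SS_def[symmetric] using SS_fin SS_0 by (intro Max_in) auto

lemma streak_ge: "m \<in> SS pi \<Longrightarrow> m \<le> streak pi"
  unfolding streak_def SS_def[symmetric] using SS_fin by simp

lemma streak_pref: "j < streak pi \<Longrightarrow> pi ! j = Suc j"
proof -
  assume j: "j < streak pi"
  have "\<forall>i\<in>{1..streak pi}. pe pi i = i" using streak_mem unfolding SS_def by simp
  then have "pe pi (Suc j) = Suc j" using j by simp
  then show ?thesis unfolding pe_def by simp
qed

lemma streak_le: "streak pi \<le> length pi"
  using streak_mem unfolding SS_def by simp

lemma streak_max: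
  assumes "streak pi < length pi"
  shows "pi ! streak pi \<noteq> Suc (streak pi)"
proof
  assume h: "pi ! streak pi = Suc (streak pi)"
  have "Suc (streak pi) \<in> SS pi" unfolding SS_def
  proof (intro CollectI conjI ballI)
    show "Suc (streak pi) \<le> length pi" using assms by simp
    fix i assume i: "i \<in> {1..Suc (streak pi)}"
    show "pe pi i = i"
    proof (cases "i = Suc (streak pi)")
      case True then show ?thesis using h unfolding pe_def by simp
    next
      case False
      then have "i - 1 < streak pi" using i by auto
      then have "pi ! (i - 1) = Suc (i - 1)" by (rule streak_pref)
      then show ?thesis unfolding pe_def using i by simp
    qed
  qed
  then show False using streak_ge by fastforce
qed

lemma grounded_facts:
  assumes g: "grounded pi" and pat: "is_pattern pi" and k: "length pi = k"
  shows "0 < streak pi" "streak pi < k"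
    "\<exists>m. 0 < m \<and> m \<le> streak pi \<and> (\<forall>s. 1 \<le> s \<longrightarrow> s + m < k \<longrightarrow> \<not> (\<forall>t. s \<le> t \<and> t < s + m \<longrightarrow> pi ! t < pi ! Suc t))"
proof -
  obtain m where m: "0 < m" "m \<le> length pi" "\<forall>i\<in>{1..m}. pe pi i = i"
    "\<not> (\<exists>j. 2 \<le> j \<and> j + m \<le> length pi \<and> (\<forall>l. j \<le> l \<and> l < j + m \<longrightarrow> pe pi l < pe pi (Suc l)))"
    using g unfolding grounded_def by blast
  have mS: "m \<in> SS pi" unfolding SS_def using m by simp
  then have mst: "m \<le> streak pi" by (rule streak_ge)
  then show "0 < streak pi" using m by simp
  show "streak pi < k"
  proof (rule ccontr)
    assume "\<not> streak pi < k"
    then have sk: "streak pi = k" using streak_le k by (metis le_neq_implies_less)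
    have "pi = [1..<Suc (length pi)]"
    proof (rule nth_equalityI)
      show "length pi = length [1..<Suc (length pi)]" by (simp only: length_upt)
      fix i assume "i < length pi"
      then have "pi ! i = Suc i" using streak_pref sk k by simp
      moreover have "[1..<Suc (length pi)] ! i = Suc i" using \<open>i < length pi\<close> by (simp only: nth_upt)
      ultimately show "pi ! i = [1..<Suc (length pi)] ! i" by simp
    qed
    then show False using g unfolding grounded_def by simp
  qed
  have "\<forall>s. 1 \<le> s \<longrightarrow> s + m < k \<longrightarrow> \<not> (\<forall>t. s \<le> t \<and> t < s + m \<longrightarrow> pi ! t < pi ! Suc t)"
  proof (intro allI impI notI)
    fix s assume s: "1 \<le> s" "s + m < k" and r: "\<forall>t. s \<le> t \<and> t < s + m \<longrightarrow> pi ! t < pi ! Suc t"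
    have "\<forall>l. Suc s \<le> l \<and> l < Suc s + m \<longrightarrow> pe pi l < pe pi (Suc l)"
    proof (intro allI impI)
      fix l assume l: "Suc s \<le> l \<and> l < Suc s + m"
      then have "s \<le> l - 1 \<and> l - 1 < s + m" by auto
      then have "pi ! (l - 1) < pi ! Suc (l - 1)" using r by blast
      then show "pe pi l < pe pi (Suc l)" unfolding pe_def using l by simp
    qed
    moreover have "2 \<le> Suc s" "Suc s + m \<le> length pi" using s k by auto
    ultimately show False using m(4) by blast
  qed
  then show "\<exists>m. 0 < m \<and> m \<le> streak pi \<and> (\<forall>s. 1 \<le> s \<longrightarrow> s + m < k \<longrightarrow> \<not> (\<forall>t. s \<le> t \<and> t < s + m \<longrightarrow> pi ! t < pi ! Suc t))"
    using m(1) mst by blast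
qed

lemma streak_next_big:
  assumes pat: "is_pattern pi" and sk: "streak pi < length pi"
  shows "streak pi < pi ! streak pi"
proof (rule ccontr)
  let ?st = "streak pi"
  assume "\<not> ?st < pi ! ?st"
  then have le: "pi ! ?st \<le> ?st" by simp
  have r: "pi ! ?st \<in> {1..length pi}" using pat_range[OF pat sk] .
  define j where "j = pi ! ?st - 1"
  have j: "j < ?st" "Suc j = pi ! ?st" using le r unfolding j_def by auto
  then have "pi ! j = pi ! ?st" using streak_pref by simp
  then have "j = ?st" using dist_idx[OF pat_distinct[OF pat]] j sk by simp
  then show False using j by simp
qed

lemma pre_inc:
  assumes pat: "is_pattern pi" and sk: "streak pi < length pi" and ab: "a < b" "b \<le> streak pi"
  shows "pi ! a < pi ! b"
proof -
  have pa: "pi ! a = Suc a" using ab streak_pref by simp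
  show ?thesis
  proof (cases "b = streak pi")
    case True
    then show ?thesis using streak_next_big[OF pat sk] pa ab by simp
  next
    case False
    then have "b < streak pi" using ab by simp
    then show ?thesis using streak_pref pa ab by simp
  qed
qed

lemma Aal_empty_big:
  assumes g: "grounded pi" and pat: "is_pattern pi" and k: "length pi = k"
    and ov: "streak pi < ov" and s: "1 \<le> s"
  shows "Aal pi u ov s = {}"
proof (rule ccontr)
  assume "Aal pi u ov s \<noteq> {}"
  then obtain x where x: "x \<in> Aal pi u ov s" by blast
  note m = Aal_mem[OF x pat k]
  obtain mm where mm: "0 < mm" "mm \<le> streak pi"
    "\<forall>s. 1 \<le> s \<longrightarrow> s + mm < k \<longrightarrow> \<not> (\<forall>t. s \<le> t \<and> t < s + mm \<longrightarrow> pi ! t < pi ! Suc t)"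
    using grounded_facts(3)[OF g pat k] by blast
  have sk: "streak pi < length pi" using grounded_facts(2)[OF g pat k] k by simp
  have o1: "ov - 1 < ov" using ov by simp
  have A: "\<forall>j<ov. s + j < length (fst x) \<and> snd x ! j = fst x ! (s + j)" using m(10) unfolding Al_def by (rule conjunct1)
  have "s + (ov - 1) < length (fst x)" using A[rule_format, OF o1] by (rule conjunct1)
  then have smk: "s + mm < k" using m(7) mm ov by simp
  have "\<forall>t. s \<le> t \<and> t < s + mm \<longrightarrow> pi ! t < pi ! Suc t"
  proof (intro allI impI)
    fix t assume t: "s \<le> t \<and> t < s + mm"
    define a where "a = t - s"
    have a: "a < mm" "t = s + a" using t unfolding a_def by auto
    have "pi ! a < pi ! Suc a" using pre_inc[OF pat sk, of a "Suc a"] a mm by simp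
    moreover have "a < ov" "Suc a < ov" using a mm ov by auto
    ultimately have "pi ! (s + a) < pi ! (s + Suc a)" using Aal_window[OF x pat k] by blast
    then show "pi ! t < pi ! Suc t" using a by simp
  qed
  then show False using mm(3) s smk by blast
qed

lemma Aal_run:
  assumes x: "x \<in> Aal pi u ov s" and pat: "is_pattern pi" and k: "length pi = k"
    and pref: "\<forall>j<ov. pi ! j = Suc j"
  shows "\<forall>t. s \<le> t \<longrightarrow> Suc t < s + ov \<longrightarrow> pi ! t < pi ! Suc t"
proof (intro allI impI)
  fix t assume t: "s \<le> t" "Suc t < s + ov"
  define a where "a = t - s"
  have a: "Suc a < ov" "t = s + a" using t unfolding a_def by auto
  have "pi ! a < pi ! Suc a" using pref a by simp
  then have "pi ! (s + a) < pi ! (s + Suc a)" using Aal_window[OF x pat k] a by simp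
  then show "pi ! t < pi ! Suc t" using a by simp
qed

definition HH :: "nat list \<Rightarrow> nat \<Rightarrow> nat \<Rightarrow> nat" where
  "HH pi k ov = (\<Sum>s\<in>{1..k - ov}. if (\<forall>t. s \<le> t \<longrightarrow> Suc t < s + ov \<longrightarrow> pi ! t < pi ! Suc t)
       then (2 * k - ov - pi ! (s + ov - 1)) choose (k - ov) else 0)"

lemma sum_atMost_split: "(\<Sum>s\<in>{..n}. f s) = f 0 + (\<Sum>s\<in>{1..n}. f (s::nat))"
proof -
  have "{..n} = insert 0 {1..n}" by auto
  then show ?thesis by simp
qed

lemma card_Aset_small:
  assumes pat: "is_pattern pi" and k: "length pi = k" and ov: "0 < ov" "ov \<le> streak pi" "ov < k"
  shows "card (Aset pi (2 * k - ov) {1..2 * k - ov}) = ((2 * k - 2 * ov) choose (k - ov)) + 2 * HH pi k ov"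
proof -
  let ?u = "2 * k - ov"
  have uo: "?u + ov = 2 * k" using ov by simp
  have pref: "\<forall>j<ov. pi ! j = Suc j" using streak_pref ov by simp
  have cs: "card (Aal pi ?u ov s) = (if (\<forall>t. s \<le> t \<longrightarrow> Suc t < s + ov \<longrightarrow> pi ! t < pi ! Suc t)
       then (2 * k - ov - pi ! (s + ov - 1)) choose (k - ov) else 0)" if s: "s \<le> k - ov" for s
  proof (cases "\<forall>t. s \<le> t \<longrightarrow> Suc t < s + ov \<longrightarrow> pi ! t < pi ! Suc t")
    case True
    have "s + ov \<le> k" using s ov by simp
    then show ?thesis using card_Aal_exact[OF pat k ov(1) ov(3) uo pref True] True by simp
  next
    case False
    have emp: "Aal pi ?u ov s = {}" using Aal_run[OF _ pat k pref] False by blast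
    show ?thesis by (subst if_not_P[OF False]) (simp add: emp)
  qed
  have c0: "card (Aal pi ?u ov 0) = (2 * k - 2 * ov) choose (k - ov)"
  proof -
    have r0: "\<forall>t. 0 \<le> t \<longrightarrow> Suc t < 0 + ov \<longrightarrow> pi ! t < pi ! Suc t" using pref by simp
    have "card (Aal pi ?u ov 0) = (2 * k - ov - pi ! (0 + ov - 1)) choose (k - ov)" using cs[of 0] r0 by simp
    moreover have "pi ! (0 + ov - 1) = ov" using pref ov by simp
    moreover have "2 * k - ov - ov = 2 * k - 2 * ov" by simp
    ultimately show ?thesis by simp
  qed
  have "card (Aset pi ?u {1..?u}) = (\<Sum>s\<in>{..k - ov}. card (Aal pi ?u ov s)) + (\<Sum>s\<in>{1..k - ov}. card (Aal pi ?u ov s))"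
    by (rule card_Aset[OF pat k ov(1) ov(3) uo])
  also have "(\<Sum>s\<in>{..k - ov}. card (Aal pi ?u ov s)) = card (Aal pi ?u ov 0) + (\<Sum>s\<in>{1..k - ov}. card (Aal pi ?u ov s))"
    by (rule sum_atMost_split)
  also have "(\<Sum>s\<in>{1..k - ov}. card (Aal pi ?u ov s)) = HH pi k ov"
    unfolding HH_def by (rule sum.cong[OF refl]) (use cs in simp)
  finally show ?thesis using c0 by simp
qed

lemma card_Aset_big:
  assumes g: "grounded pi" and pat: "is_pattern pi" and k: "length pi = k" and ov: "streak pi < ov" "ov < k"
  shows "card (Aset pi (2 * k - ov) {1..2 * k - ov}) \<le> (2 * k - 2 * ov) choose (k - ov)"
proof -
  let ?u = "2 * k - ov"
  have ov0: "0 < ov" using ov by simp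
  have uo: "?u + ov = 2 * k" using ov by simp
  have e: "\<And>s. s \<in> {1..k - ov} \<Longrightarrow> card (Aal pi ?u ov s) = 0" using Aal_empty_big[OF g pat k ov(1)] by simp
  have "card (Aset pi ?u {1..?u}) = (\<Sum>s\<in>{..k - ov}. card (Aal pi ?u ov s)) + (\<Sum>s\<in>{1..k - ov}. card (Aal pi ?u ov s))"
    by (rule card_Aset[OF pat k ov0 ov(2) uo])
  also have "(\<Sum>s\<in>{..k - ov}. card (Aal pi ?u ov s)) = card (Aal pi ?u ov 0) + (\<Sum>s\<in>{1..k - ov}. card (Aal pi ?u ov s))"
    by (rule sum_atMost_split)
  also have "(\<Sum>s\<in>{1..k - ov}. card (Aal pi ?u ov s)) = 0" using e by simp
  finally show ?thesis using card_Aal0_le[OF pat k ov0 ov(2) uo] by simp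
qed


definition gg :: "nat \<Rightarrow> nat \<Rightarrow> nat \<Rightarrow> nat" where
  "gg k ov v = (2 * k - ov - v) choose (k - ov)"

lemma gg_dbl:
  assumes "ov \<le> w" "w < k"
  shows "2 * gg k ov (Suc w) \<le> gg k ov w"
proof -
  define N where "N = 2 * k - ov - w"
  define r where "r = k - ov"
  have N0: "0 < N" unfolding N_def using assms by simp
  have e1: "gg k ov w = N choose r" unfolding gg_def N_def r_def by simp
  have e2: "gg k ov (Suc w) = (N - 1) choose r" unfolding gg_def N_def r_def by simp
  have ab: "(N - r) * (N choose r) = N * ((N - 1) choose r)" by (rule binomial_absorb_comp)
  have le: "2 * (N - r) \<le> N" unfolding N_def r_def using assms by simp
  have "N * (2 * ((N - 1) choose r)) = 2 * (N - r) * (N choose r)" using ab by simp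
  also have "\<dots> \<le> N * (N choose r)" using le by (intro mult_right_mono) simp_all
  finally have "N * (2 * ((N - 1) choose r)) \<le> N * (N choose r)" .
  then have "2 * ((N - 1) choose r) \<le> N choose r" using N0 by simp
  then show ?thesis using e1 e2 by simp
qed

lemma gg_tail:
  assumes "ov \<le> w" "w \<le> k"
  shows "(\<Sum>v\<in>{w<..k}. gg k ov v) < gg k ov w"
  using assms
proof (induction "k - w" arbitrary: w)
  case 0
  then have "w = k" by simp
  then show ?case unfolding gg_def by simp
next
  case (Suc d)
  then have wk: "w < k" by simp
  have IH: "(\<Sum>v\<in>{Suc w<..k}. gg k ov v) < gg k ov (Suc w)" using Suc wk by simp
  have "{w<..k} = insert (Suc w) {Suc w<..k}" using wk by auto
  then have "(\<Sum>v\<in>{w<..k}. gg k ov v) = gg k ov (Suc w) + (\<Sum>v\<in>{Suc w<..k}. gg k ov v)" by simp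
  also have "\<dots> < 2 * gg k ov (Suc w)" using IH by simp
  also have "\<dots> \<le> gg k ov w" using gg_dbl Suc.prems wk by blast
  finally show ?case .
qed

lemma gg_less:
  assumes A: "A \<subseteq> {ov..k}" and B: "B \<subseteq> {ov..k}" and w: "w \<in> A" "w \<notin> B"
    and below: "\<forall>v<w. v \<in> A \<longleftrightarrow> v \<in> B"
  shows "(\<Sum>v\<in>B. gg k ov v) < (\<Sum>v\<in>A. gg k ov v)"
proof -
  have fA: "finite A" and fB: "finite B" using A B finite_subset by auto
  have eq: "A \<inter> {..<w} = B \<inter> {..<w}" using below by auto
  have sA: "(\<Sum>v\<in>A. gg k ov v) = (\<Sum>v\<in>A \<inter> {..<w}. gg k ov v) + (\<Sum>v\<in>A - {..<w}. gg k ov v)"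
    by (rule sum.Int_Diff[OF fA])
  have sB: "(\<Sum>v\<in>B. gg k ov v) = (\<Sum>v\<in>B \<inter> {..<w}. gg k ov v) + (\<Sum>v\<in>B - {..<w}. gg k ov v)"
    by (rule sum.Int_Diff[OF fB])
  have wA: "w \<in> A - {..<w}" using w by simp
  have fAw: "finite (A - {..<w})" using fA by simp
  have "(\<Sum>v\<in>A - {..<w}. gg k ov v) = gg k ov w + (\<Sum>v\<in>A - {..<w} - {w}. gg k ov v)"
    by (rule sum.remove[OF fAw wA])
  then have "gg k ov w \<le> (\<Sum>v\<in>A - {..<w}. gg k ov v)" by simp
  moreover have "(\<Sum>v\<in>B - {..<w}. gg k ov v) \<le> (\<Sum>v\<in>{w<..k}. gg k ov v)"
  proof (rule sum_mono2)
    show "finite {w<..k}" by simp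
    show "B - {..<w} \<subseteq> {w<..k}"
    proof
      fix v assume v: "v \<in> B - {..<w}"
      then have "v \<noteq> w" using w by auto
      then show "v \<in> {w<..k}" using v B by auto
    qed
  qed simp
  moreover have "w \<in> {ov..k}" using w A by auto
  then have "(\<Sum>v\<in>{w<..k}. gg k ov v) < gg k ov w" using gg_tail by simp
  ultimately show ?thesis using sA sB eq by simp
qed

lemma gg_unique:
  assumes A: "A \<subseteq> {ov..k}" and B: "B \<subseteq> {ov..k}"
    and e: "(\<Sum>v\<in>A. gg k ov v) = (\<Sum>v\<in>B. gg k ov v)"
  shows "A = B"
proof (rule ccontr)
  assume ne: "A \<noteq> B"
  define D where "D = (A - B) \<union> (B - A)"
  have fA: "finite A" by (rule finite_subset[OF A]) simp
  have fB: "finite B" by (rule finite_subset[OF B]) simp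
  have fD: "finite D" unfolding D_def using fA fB by simp
  have D0: "D \<noteq> {}" using ne unfolding D_def by auto
  define w where "w = Min D"
  have wD: "w \<in> D" unfolding w_def using fD D0 by simp
  have below: "\<forall>v<w. v \<in> A \<longleftrightarrow> v \<in> B"
  proof (intro allI impI)
    fix v assume "v < w"
    then have "v \<notin> D" unfolding w_def using fD Min_le by fastforce
    then show "v \<in> A \<longleftrightarrow> v \<in> B" unfolding D_def by blast
  qed
  show False
  proof (cases "w \<in> A")
    case True
    then have "w \<notin> B" using wD unfolding D_def by blast
    then show False using gg_less[OF A B True _ below] e by simp
  next
    case False
    then have "w \<in> B" using wD unfolding D_def by blast
    moreover have "\<forall>v<w. v \<in> B \<longleftrightarrow> v \<in> A" using below by blast
    ultimately show False using gg_less[OF B A _ False] e by simp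
  qed
qed

definition HS :: "nat list \<Rightarrow> nat \<Rightarrow> nat set" where
  "HS pi i = {m. 1 \<le> m \<and> m < i \<and> (\<forall>j. i - m + 1 \<le> j \<and> j < i \<longrightarrow> pe pi j < pe pi (Suc j))}"

lemma hp_ge:
  assumes i: "2 \<le> i" and ov: "1 \<le> ov"
  shows "ov \<le> height_pos pi i \<longleftrightarrow> ov \<in> HS pi i"
proof -
  have hp: "height_pos pi i = Max (HS pi i)" unfolding height_pos_def HS_def by simp
  have fin: "finite (HS pi i)" unfolding HS_def by (rule finite_subset[of _ "{..<i}"]) auto
  have one: "1 \<in> HS pi i" unfolding HS_def using i by auto
  have dc: "m' \<in> HS pi i" if "m \<in> HS pi i" "1 \<le> m'" "m' \<le> m" for m m'
    using that unfolding HS_def by auto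
  show ?thesis
  proof
    assume "ov \<le> height_pos pi i"
    moreover have "Max (HS pi i) \<in> HS pi i" using fin one by (intro Max_in) auto
    ultimately show "ov \<in> HS pi i" using dc ov hp by simp
  next
    assume "ov \<in> HS pi i"
    then show "ov \<le> height_pos pi i" using hp fin by simp
  qed
qed

lemma pos_the:
  assumes pat: "is_pattern pi" and k: "length pi = k" and i: "1 \<le> i" "i \<le> k"
  shows "(THE i'. 1 \<le> i' \<and> i' \<le> length pi \<and> pe pi i' = pe pi i) = i"
proof (rule the_equality)
  show "1 \<le> i \<and> i \<le> length pi \<and> pe pi i = pe pi i" using i k by simp
next
  fix i' assume h: "1 \<le> i' \<and> i' \<le> length pi \<and> pe pi i' = pe pi i"
  then have "pi ! (i' - 1) = pi ! (i - 1)" unfolding pe_def by simp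
  moreover have "i' - 1 < length pi" "i - 1 < length pi" using h i k by auto
  ultimately have "i' - 1 = i - 1" using dist_idx[OF pat_distinct[OF pat]] by blast
  then show "i' = i" using h i by arith
qed

definition VV :: "nat list \<Rightarrow> nat \<Rightarrow> nat \<Rightarrow> nat set" where
  "VV pi k ov = (\<lambda>s. pi ! (s + ov - 1)) ` {s \<in> {1..k - ov}. \<forall>t. s \<le> t \<longrightarrow> Suc t < s + ov \<longrightarrow> pi ! t < pi ! Suc t}"

lemma VV_char:
  assumes pat: "is_pattern pi" and k: "length pi = k" and p0: "pi ! 0 = 1" and ov: "1 \<le> ov"
  shows "v \<in> VV pi k ov \<longleftrightarrow> v \<in> {2..k} \<and> ov \<le> height_val pi v"
proof
  assume "v \<in> VV pi k ov"
  then obtain s where s: "1 \<le> s" "s \<le> k - ov" "\<forall>t. s \<le> t \<longrightarrow> Suc t < s + ov \<longrightarrow> pi ! t < pi ! Suc t"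
    "v = pi ! (s + ov - 1)" unfolding VV_def by auto
  define i where "i = s + ov"
  have i: "2 \<le> i" "i \<le> k" using s ov unfolding i_def by auto
  have ik: "i - 1 < k" using i by simp
  have vi: "pe pi i = v" unfolding pe_def i_def using s by simp
  have "pi ! (i - 1) \<in> {1..k}" using pat_range[OF pat] ik k by simp
  then have vr: "v \<in> {1..k}" using vi unfolding pe_def by simp
  have "v \<noteq> 1"
  proof
    assume "v = 1"
    then have "pi ! (i - 1) = pi ! 0" using vi p0 unfolding pe_def by simp
    moreover have "i - 1 < length pi" "0 < length pi" using ik k by auto
    ultimately have "i - 1 = 0" using dist_idx[OF pat_distinct[OF pat]] by blast
    then show False using i by simp
  qed
  then have v2: "v \<in> {2..k}" using vr by auto
  have hv: "height_val pi v = height_pos pi i"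
    unfolding height_val_def using pos_the[OF pat k, of i] i vi by simp
  have "ov \<in> HS pi i" unfolding HS_def
  proof (intro CollectI conjI allI impI)
    show "1 \<le> ov" by (rule ov)
    show "ov < i" using s unfolding i_def by simp
    fix j assume j: "i - ov + 1 \<le> j \<and> j < i"
    then have "s \<le> j - 1" "Suc (j - 1) < s + ov" unfolding i_def by auto
    then have "pi ! (j - 1) < pi ! Suc (j - 1)" using s(3) by blast
    then show "pe pi j < pe pi (Suc j)" unfolding pe_def using j unfolding i_def by simp
  qed
  then show "v \<in> {2..k} \<and> ov \<le> height_val pi v" using hp_ge[OF i(1) ov] hv v2 by simp
next
  assume h: "v \<in> {2..k} \<and> ov \<le> height_val pi v"
  then have "v \<in> set pi" using pat_set[OF pat] k by auto
  then obtain j where j: "j < k" "pi ! j = v" using k by (metis in_set_conv_nth)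
  define i where "i = Suc j"
  have j0: "j \<noteq> 0"
  proof
    assume "j = 0" then have "v = 1" using j p0 by simp
    then show False using h by simp
  qed
  have i: "2 \<le> i" "i \<le> k" "1 \<le> i" using j j0 unfolding i_def by auto
  have vi: "pe pi i = v" unfolding pe_def i_def using j by simp
  have hv: "height_val pi v = height_pos pi i"
    unfolding height_val_def using pos_the[OF pat k i(3) i(2)] vi by simp
  have "ov \<in> HS pi i" using hp_ge[OF i(1) ov] h hv by simp
  then have hs: "ov < i" "\<forall>j'. i - ov + 1 \<le> j' \<and> j' < i \<longrightarrow> pe pi j' < pe pi (Suc j')" unfolding HS_def by auto
  define s where "s = i - ov"
  have s: "1 \<le> s" "s \<le> k - ov" using hs i unfolding s_def by auto
  have run: "\<forall>t. s \<le> t \<longrightarrow> Suc t < s + ov \<longrightarrow> pi ! t < pi ! Suc t"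
  proof (intro allI impI)
    fix t assume t: "s \<le> t" "Suc t < s + ov"
    then have "i - ov + 1 \<le> Suc t \<and> Suc t < i" unfolding s_def using hs by auto
    then have "pe pi (Suc t) < pe pi (Suc (Suc t))" using hs(2) by blast
    then show "pi ! t < pi ! Suc t" unfolding pe_def by simp
  qed
  have "v = pi ! (s + ov - 1)" using j hs unfolding s_def i_def by simp
  then show "v \<in> VV pi k ov" unfolding VV_def using s run by auto
qed

lemma VV_range:
  assumes pat: "is_pattern pi" and k: "length pi = k"
  shows "VV pi k ov \<subseteq> {ov..k}"
proof
  fix v assume "v \<in> VV pi k ov"
  then obtain s where s: "1 \<le> s" "s \<le> k - ov" "\<forall>t. s \<le> t \<longrightarrow> Suc t < s + ov \<longrightarrow> pi ! t < pi ! Suc t"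
    "v = pi ! (s + ov - 1)" unfolding VV_def by auto
  have lb: "j < ov \<Longrightarrow> Suc j \<le> pi ! (s + j)" for j
  proof (induction j)
    case 0
    have "s < k" using s 0 by simp
    then show ?case using pat_range[OF pat] k by fastforce
  next
    case (Suc j)
    have "pi ! (s + j) < pi ! Suc (s + j)" using s(3) Suc.prems by simp
    then show ?case using Suc by simp
  qed
  show "v \<in> {ov..k}"
  proof -
    have "ov \<le> v"
    proof (cases "ov = 0")
      case True then show ?thesis by simp
    next
      case False
      then have "ov - 1 < ov" by simp
      then have "Suc (ov - 1) \<le> pi ! (s + (ov - 1))" by (rule lb)
      moreover have "s + (ov - 1) = s + ov - 1" "Suc (ov - 1) = ov" using False by auto
      ultimately show ?thesis using s(4) by simp
    qed
    moreover have "s + ov - 1 < k" using s by simp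
    then have "v \<le> k" using pat_range[OF pat] k s(4) by fastforce
    ultimately show ?thesis by simp
  qed
qed

lemma HH_VV:
  assumes pat: "is_pattern pi" and k: "length pi = k"
  shows "HH pi k ov = (\<Sum>v\<in>VV pi k ov. gg k ov v)"
proof -
  let ?R = "\<lambda>s. \<forall>t. s \<le> t \<longrightarrow> Suc t < s + ov \<longrightarrow> pi ! t < pi ! Suc t"
  let ?S = "{s \<in> {1..k - ov}. ?R s}"
  have "HH pi k ov = (\<Sum>s\<in>?S. (2 * k - ov - pi ! (s + ov - 1)) choose (k - ov))"
    unfolding HH_def by (rule sum.inter_filter[symmetric]) simp
  also have "\<dots> = (\<Sum>s\<in>?S. gg k ov (pi ! (s + ov - 1)))" unfolding gg_def by simp
  also have "\<dots> = (\<Sum>v\<in>VV pi k ov. gg k ov v)"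
  proof -
    have inj: "inj_on (\<lambda>s. pi ! (s + ov - 1)) ?S"
    proof (rule inj_onI)
      fix a b assume a: "a \<in> ?S" and b: "b \<in> ?S" and e: "pi ! (a + ov - 1) = pi ! (b + ov - 1)"
      have "a + ov - 1 < k" "b + ov - 1 < k" using a b by auto
      then have "a + ov - 1 = b + ov - 1" using dist_idx[OF pat_distinct[OF pat]] e k by simp
      then show "a = b" using a b by auto
    qed
    show ?thesis unfolding VV_def using sum.reindex[OF inj, of "gg k ov"] by simp
  qed
  finally show ?thesis .
qed

lemma VV_empty_big:
  assumes g: "grounded pi" and pat: "is_pattern pi" and k: "length pi = k" and ov: "streak pi < ov"
  shows "VV pi k ov = {}"
proof (rule ccontr)
  assume "VV pi k ov \<noteq> {}"
  then obtain s where s: "1 \<le> s" "s \<le> k - ov" "\<forall>t. s \<le> t \<longrightarrow> Suc t < s + ov \<longrightarrow> pi ! t < pi ! Suc t"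
    unfolding VV_def by auto
  obtain mm where mm: "0 < mm" "mm \<le> streak pi"
    "\<forall>s. 1 \<le> s \<longrightarrow> s + mm < k \<longrightarrow> \<not> (\<forall>t. s \<le> t \<and> t < s + mm \<longrightarrow> pi ! t < pi ! Suc t)"
    using grounded_facts(3)[OF g pat k] by blast
  have sk: "streak pi < k" using grounded_facts(2)[OF g pat k] .
  have smk: "s + mm < k" using s mm ov sk by simp
  have "\<forall>t. s \<le> t \<and> t < s + mm \<longrightarrow> pi ! t < pi ! Suc t"
  proof (intro allI impI)
    fix t assume "s \<le> t \<and> t < s + mm"
    then have "s \<le> t" "Suc t < s + ov" using mm ov by auto
    then show "pi ! t < pi ! Suc t" using s(3) by blast
  qed
  then show False using mm(3) s(1) smk by blast
qed

theorem proposition4p31: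
  fixes pi pi' :: "nat list" and k :: nat
  assumes "is_pattern pi" and "is_pattern pi'"
    and "length pi = k" and "length pi' = k"
    and "grounded pi" and "grounded pi'"
    and "strongly_c_forest_wilf_equiv pi pi'"
  shows "streak pi = streak pi' \<and>
         (\<forall>i\<in>{2..k}. height_val pi i = height_val pi' i)"
proof -
  note pat = assms(1) and pat' = assms(2) and k = assms(3) and k' = assms(4)
    and g = assms(5) and g' = assms(6)
  have len: "length pi = length pi'" using k k' by simp
  have W: "\<forall>n. Wt pi n = Wt pi' n" using Wt_eq[OF assms(7) len] by blast
  have T: "\<And>u. card (Aset pi u {1..u}) = card (Aset pi' u {1..u})" using triangular[OF pat pat' len W] .
  have st: "0 < streak pi" "streak pi < k" using grounded_facts[OF g pat k] by auto
  have st': "0 < streak pi'" "streak pi' < k" using grounded_facts[OF g' pat' k'] by auto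
  have ineq: "\<not> streak a < streak b" if ga: "grounded a" "is_pattern a" "length a = k"
    and gb: "grounded b" "is_pattern b" "length b = k"
    and Tab: "\<And>u. card (Aset a u {1..u}) = card (Aset b u {1..u})" for a b
  proof
    assume lt: "streak a < streak b"
    define ov where "ov = Suc (streak a)"
    have sb: "streak b < k" using grounded_facts(2)[OF gb] .
    have ovk: "ov < k" "ov \<le> streak b" "0 < ov" using lt sb unfolding ov_def by auto
    have big: "card (Aset a (2 * k - ov) {1..2 * k - ov}) \<le> (2 * k - 2 * ov) choose (k - ov)"
      using card_Aset_big[OF ga, of ov] ovk unfolding ov_def by simp
    have small: "card (Aset b (2 * k - ov) {1..2 * k - ov}) = ((2 * k - 2 * ov) choose (k - ov)) + 2 * HH b k ov"
      using card_Aset_small[OF gb(2,3) ovk(3) ovk(2) ovk(1)] .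
    have sbk: "streak b < length b" using sb gb(3) by simp
    have r1: "\<forall>t. 1 \<le> t \<longrightarrow> Suc t < 1 + ov \<longrightarrow> b ! t < b ! Suc t"
    proof (intro allI impI)
      fix t assume "1 \<le> t" "Suc t < 1 + ov"
      then show "b ! t < b ! Suc t" using pre_inc[OF gb(2) sbk, of t "Suc t"] ovk by simp
    qed
    have bov: "b ! ov \<le> k" using pat_range[OF gb(2)] ovk gb(3) by fastforce
    have pos: "0 < (2 * k - ov - b ! (1 + ov - 1)) choose (k - ov)" using bov by simp
    have mem: "1 \<in> {1..k - ov}" using ovk by simp
    have "(if (\<forall>t. 1 \<le> t \<longrightarrow> Suc t < 1 + ov \<longrightarrow> b ! t < b ! Suc t)
       then (2 * k - ov - b ! (1 + ov - 1)) choose (k - ov) else 0) \<le> HH b k ov"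
      unfolding HH_def by (rule member_le_sum[OF mem]) auto
    then have le2: "(2 * k - ov - b ! (1 + ov - 1)) choose (k - ov) \<le> HH b k ov" by (simp only: if_P[OF r1])
    then have "0 < HH b k ov" using pos by linarith
    then show False using big small Tab[of "2 * k - ov"] by simp
  qed
  have seq: "streak pi = streak pi'"
    using ineq[OF g pat k g' pat' k' T] ineq[OF g' pat' k' g pat k T[symmetric]] by simp
  have hle: "height_val b v \<le> height_val a v"
    if ga: "grounded a" "is_pattern a" "length a = k" and gb: "grounded b" "is_pattern b" "length b = k"
      and sab: "streak a = streak b"
      and Tab: "\<And>u. card (Aset a u {1..u}) = card (Aset b u {1..u})" and v: "v \<in> {2..k}" for a b v
  proof -
    define ov where "ov = height_val b v"
    have a0: "a ! 0 = 1" using streak_pref grounded_facts(1)[OF ga] by simp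
    have b0: "b ! 0 = 1" using streak_pref grounded_facts(1)[OF gb] by simp
    have sb: "streak b < k" using grounded_facts(2)[OF gb] .
    have ov1: "1 \<le> ov"
    proof -
      have "v \<in> set b" using pat_set[OF gb(2)] gb(3) v by auto
      then obtain j where j: "j < k" "b ! j = v" using gb(3) by (metis in_set_conv_nth)
      have "j \<noteq> 0"
      proof
        assume "j = 0" then have "v = 1" using j b0 by simp
        then show False using v by simp
      qed
      then have i: "2 \<le> Suc j" "1 \<le> Suc j" "Suc j \<le> k" using j by auto
      have "pe b (Suc j) = v" unfolding pe_def using j by simp
      then have "height_val b v = height_pos b (Suc j)"
        unfolding height_val_def using pos_the[OF gb(2,3) i(2,3)] by simp
      moreover have "1 \<in> HS b (Suc j)" unfolding HS_def using i by auto
      ultimately show ?thesis using hp_ge[OF i(1), of 1] unfolding ov_def by simp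
    qed
    have vb: "v \<in> VV b k ov" using VV_char[OF gb(2,3) b0 ov1] v unfolding ov_def by simp
    have ovs: "ov \<le> streak b"
    proof (rule ccontr)
      assume "\<not> ov \<le> streak b"
      then have "VV b k ov = {}" using VV_empty_big[OF gb] by simp
      then show False using vb by simp
    qed
    have ovk: "ov < k" using ovs sb by simp
    have e1: "card (Aset a (2 * k - ov) {1..2 * k - ov}) = ((2 * k - 2 * ov) choose (k - ov)) + 2 * HH a k ov"
      using card_Aset_small[OF ga(2,3) _ _ ovk] ov1 ovs sab by simp
    have e2: "card (Aset b (2 * k - ov) {1..2 * k - ov}) = ((2 * k - 2 * ov) choose (k - ov)) + 2 * HH b k ov"
      using card_Aset_small[OF gb(2,3) _ _ ovk] ov1 ovs by simp
    have "HH a k ov = HH b k ov" using e1 e2 Tab[of "2 * k - ov"] by simp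
    then have "(\<Sum>x\<in>VV a k ov. gg k ov x) = (\<Sum>x\<in>VV b k ov. gg k ov x)"
      using HH_VV[OF ga(2,3)] HH_VV[OF gb(2,3)] by simp
    then have "VV a k ov = VV b k ov" using gg_unique[OF VV_range[OF ga(2,3)] VV_range[OF gb(2,3)]] by simp
    then have "v \<in> VV a k ov" using vb by simp
    then show ?thesis using VV_char[OF ga(2,3) a0 ov1] unfolding ov_def by simp
  qed
  have "\<forall>i\<in>{2..k}. height_val pi i = height_val pi' i"
  proof
    fix v assume v: "v \<in> {2..k}"
    have "height_val pi' v \<le> height_val pi v" using hle[OF g pat k g' pat' k' seq T v] .
    moreover have "height_val pi v \<le> height_val pi' v" using hle[OF g' pat' k' g pat k seq[symmetric] T[symmetric] v] .
    ultimately show "height_val pi v = height_val pi' v" by simp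
  qed
  then show ?thesis using seq by simp
qed

end
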